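(* (Multiparty cut-elimination in MRL.) Let $n\ge1$ and let $R_1,\ldots,R_n\subseteq\mathcal{R}$ be such that the complements $\overline{R_1},\ldots,\overline{R_n}$ are pairwise disjoint and $\overline{R_1}\cup\cdots\cup\overline{R_n}=\mathcal{R}$. For all sequents $\Gamma_1,\ldots,\Gamma_n$ and every formula $A$ of MRL: if $\Gamma_i, R_i{:}A$ is derivable in MRL for each $1\le i\le n$, then $\Gamma_1,\ldots,\Gamma_n$ is derivable in MRL.
   Context: Fix a nonempty set $\mathcal{R}$ (the set of roles). For $R\subseteq\mathcal{R}$ write $\overline{R}=\mathcal{R}\setminus R$. An ultrafilter $\mathcal{U}$ on $\mathcal{R}$ is a set of subsets of $\mathcal{R}$ such that $\mathcal{R}\in\mathcal{U}$; $R_1\in\mathcal{U}$ and $R_1\subseteq R_2$ imply $R_2\in\mathcal{U}$; $R_1,R_2\in\mathcal{U}$ imply $R_1\cap R_2\in\mathcal{U}$; and for every $R\subseteq\mathcal{R}$, $R\in\mathcal{U}$ or $\overline{R}\in\mathcal{U}$. An endomorphism is any function $f:\mathcal{R}\to\mathcal{R}$, and $f^{-1}(R)$ denotes the preimage of $R$. Fix a first-order language of terms $t$ with variables $x$, and a collection of primitive (atomic) formulas $a$ (which may contain terms). Formulas of MRL: $A ::= a \mid \neg_f(A) \mid A_1\wedge_{\mathcal{U}} A_2 \mid A\supset_{f,\mathcal{U}} B \mid \forall_{\mathcal{U}}(\lambda x.A)$, with $f$ an endomorphism and $\mathcal{U}$ an ultrafilter on $\mathcal{R}$; $x$ is bound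 in $\forall_{\mathcal{U}}(\lambda x.A)$, and $A[t/x]$ is capture-avoiding substitution. An i-formula is a pair $R{:}A$ with $R\subseteq\mathcal{R}$ and $A$ a formula; a sequent is a finite multiset of i-formulas, and comma denotes multiset union. Derivability in MRL is given by the rules (premises $\Rightarrow$ conclusion, $\Gamma,\Gamma_1,\Gamma_2$ arbitrary sequents): (Id) $\Gamma, R_1{:}a,\ldots,R_n{:}a$ is derivable whenever $n\ge1$ and $R_1,\ldots,R_n$ are pairwise disjoint with union $\mathcal{R}$; (Weaken) $\Gamma,R{:}A,R{:}A \Rightarrow \Gamma,R{:}A$; ($\neg$) $\Gamma, f^{-1}(R){:}A \Rightarrow \Gamma, R{:}\neg_f(A)$; ($\wedge$-neg-l) if $R\notin\mathcal{U}$: $\Gamma,R{:}A\Rightarrow\Gamma,R{:}A\wedge_{\mathcal{U}}B$; ($\wedge$-neg-r) if $R\notin\mathcal{U}$: $\Gamma,R{:}B\Rightarrow\Gamma,R{:}A\wedge_{\mathcal{U}}B$; ($\wedge$-pos) if $R\in\mathcal{U}$: $(\Gamma,R{:}A;\ \Gamma,R{:}B)\Rightarrow\Gamma,R{:}A\wedge_{\mathcal{U}}B$; ($\supset$-neg) if $R\notin\mathcal{U}$: $\Gamma,f^{-1}(R){:}A,R{:}B\Rightarrow\Gamma,R{:}A\supset_{f,\mathcal{U}}B$; ($\supset$-pos) if $R\in\mathcal{U}$: $(\Gamma_1,f^{-1}(R){:}A;\ \Gamma_2,R{:}B)\Rightarrow\Gamma_1,\Gamma_2,R{:}A\supset_{f,\mathcal{U}}B$;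 ($\forall$-neg) if $R\notin\mathcal{U}$ and $t$ is a term: $\Gamma,R{:}A[t/x]\Rightarrow\Gamma,R{:}\forall_{\mathcal{U}}(\lambda x.A)$; ($\forall$-pos) if $R\in\mathcal{U}$ and $x$ has no free occurrence in $\Gamma$: $\Gamma,R{:}A\Rightarrow\Gamma,R{:}\forall_{\mathcal{U}}(\lambda x.A)$. A sequent is derivable in MRL if it is the conclusion of a finite derivation tree built from these rules. *)

theory Defs
  imports Main "HOL-Library.Multiset"
begin

definition ultrafilter :: "'r set set \<Rightarrow> bool" where
  "ultrafilter U \<longleftrightarrow>
     UNIV \<in> U \<and>
     (\<forall>R1 R2. R1 \<in> U \<and> R1 \<subseteq> R2 \<longrightarrow> R2 \<in> U) \<and>
     (\<forall>R1 R2. R1 \<in> U \<and> R2 \<in> U \<longrightarrow> R1 \<inter> R2 \<in> U) \<and>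
     (\<forall>R. R \<in> U \<or> - R \<in> U)"

datatype 'f trm = Var nat | Fn 'f "'f trm list"

datatype ('r, 'f, 'p) fm =
    Atom 'p "'f trm list"
  | Neg "'r \<Rightarrow> 'r" "('r, 'f, 'p) fm"
  | Conj "'r set set" "('r, 'f, 'p) fm" "('r, 'f, 'p) fm"
  | Imp "'r \<Rightarrow> 'r" "'r set set" "('r, 'f, 'p) fm" "('r, 'f, 'p) fm"
  | Forall "'r set set" "('r, 'f, 'p) fm"

fun wf_fm :: "('r, 'f, 'p) fm \<Rightarrow> bool" where
  "wf_fm (Atom p ts) = True"
| "wf_fm (Neg f A) = wf_fm A"
| "wf_fm (Conj U A B) = (ultrafilter U \<and> wf_fm A \<and> wf_fm B)"
| "wf_fm (Imp f U A B) = (ultrafilter U \<and> wf_fm A \<and> wf_fm B)"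
| "wf_fm (Forall U A) = (ultrafilter U \<and> wf_fm A)"

fun lift_trm :: "nat \<Rightarrow> 'f trm \<Rightarrow> 'f trm" where
  "lift_trm k (Var i) = Var (if i < k then i else Suc i)"
| "lift_trm k (Fn f ts) = Fn f (map (lift_trm k) ts)"

fun subst_trm :: "nat \<Rightarrow> 'f trm \<Rightarrow> 'f trm \<Rightarrow> 'f trm" where
  "subst_trm k t (Var i) = (if i < k then Var i else if i = k then t else Var (i - 1))"
| "subst_trm k t (Fn f ts) = Fn f (map (subst_trm k t) ts)"

fun lift_fm :: "nat \<Rightarrow> ('r, 'f, 'p) fm \<Rightarrow> ('r, 'f, 'p) fm" where
  "lift_fm k (Atom p ts) = Atom p (map (lift_trm k) ts)"
| "lift_fm k (Neg f A) = Neg f (lift_fm k A)"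
| "lift_fm k (Conj U A B) = Conj U (lift_fm k A) (lift_fm k B)"
| "lift_fm k (Imp f U A B) = Imp f U (lift_fm k A) (lift_fm k B)"
| "lift_fm k (Forall U A) = Forall U (lift_fm (Suc k) A)"

fun subst_fm :: "nat \<Rightarrow> 'f trm \<Rightarrow> ('r, 'f, 'p) fm \<Rightarrow> ('r, 'f, 'p) fm" where
  "subst_fm k t (Atom p ts) = Atom p (map (subst_trm k t) ts)"
| "subst_fm k t (Neg f A) = Neg f (subst_fm k t A)"
| "subst_fm k t (Conj U A B) = Conj U (subst_fm k t A) (subst_fm k t B)"
| "subst_fm k t (Imp f U A B) = Imp f U (subst_fm k t A) (subst_fm k t B)"
| "subst_fm k t (Forall U A) = Forall U (subst_fm (Suc k) (lift_trm 0 t) A)"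

type_synonym ('r, 'f, 'p) sequent = "('r set \<times> ('r, 'f, 'p) fm) multiset"

definition lift_seq :: "('r, 'f, 'p) sequent \<Rightarrow> ('r, 'f, 'p) sequent" where
  "lift_seq \<Gamma> = image_mset (\<lambda>(R, B). (R, lift_fm 0 B)) \<Gamma>"

inductive derivable :: "('r, 'f, 'p) sequent \<Rightarrow> bool" where
  Id: "\<lbrakk> Rs \<noteq> [];
         \<forall>i < length Rs. \<forall>j < length Rs. i \<noteq> j \<longrightarrow> Rs ! i \<inter> Rs ! j = {};
         \<Union> (set Rs) = UNIV \<rbrakk>
       \<Longrightarrow> derivable (\<Gamma> + mset (map (\<lambda>R. (R, Atom p ts)) Rs))"
| Weaken: "derivable (\<Gamma> + {#(R, A), (R, A)#}) \<Longrightarrow> derivable (\<Gamma> + {#(R, A)#})"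
| NegR: "derivable (\<Gamma> + {#(f -` R, A)#}) \<Longrightarrow> derivable (\<Gamma> + {#(R, Neg f A)#})"
| ConjNegL: "\<lbrakk> R \<notin> U; derivable (\<Gamma> + {#(R, A)#}) \<rbrakk>
       \<Longrightarrow> derivable (\<Gamma> + {#(R, Conj U A B)#})"
| ConjNegR: "\<lbrakk> R \<notin> U; derivable (\<Gamma> + {#(R, B)#}) \<rbrakk>
       \<Longrightarrow> derivable (\<Gamma> + {#(R, Conj U A B)#})"
| ConjPos: "\<lbrakk> R \<in> U; derivable (\<Gamma> + {#(R, A)#}); derivable (\<Gamma> + {#(R, B)#}) \<rbrakk>
       \<Longrightarrow> derivable (\<Gamma> + {#(R, Conj U A B)#})"
| ImpNeg: "\<lbrakk> R \<notin> U; derivable (\<Gamma> + {#(f -` R, A), (R, B)#}) \<rbrakk>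
       \<Longrightarrow> derivable (\<Gamma> + {#(R, Imp f U A B)#})"
| ImpPos: "\<lbrakk> R \<in> U; derivable (\<Gamma>1 + {#(f -` R, A)#}); derivable (\<Gamma>2 + {#(R, B)#}) \<rbrakk>
       \<Longrightarrow> derivable (\<Gamma>1 + \<Gamma>2 + {#(R, Imp f U A B)#})"
| ForallNeg: "\<lbrakk> R \<notin> U; derivable (\<Gamma> + {#(R, subst_fm 0 t A)#}) \<rbrakk>
       \<Longrightarrow> derivable (\<Gamma> + {#(R, Forall U A)#})"
| ForallPos: "\<lbrakk> R \<in> U; derivable (lift_seq \<Gamma> + {#(R, A)#}) \<rbrakk>
       \<Longrightarrow> derivable (\<Gamma> + {#(R, Forall U A)#})"

definition wf_seq :: "('r, 'f, 'p) sequent \<Rightarrow> bool" where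
  "wf_seq \<Gamma> \<longleftrightarrow> (\<forall>x \<in># \<Gamma>. wf_fm (snd x))"

end

theory Submission
  imports Defs
begin

section \<open>de Bruijn lemmas\<close>

lemma lift_lift_trm: "i \<le> k \<Longrightarrow> lift_trm i (lift_trm k t) = lift_trm (Suc k) (lift_trm i t)"
  by (induction t) auto

lemma lift_subst_trm_le: "i \<le> k \<Longrightarrow> lift_trm i (subst_trm k s u) = subst_trm (Suc k) (lift_trm i s) (lift_trm i u)"
  by (induction u) auto

lemma lift_subst_trm_ge: "k \<le> i \<Longrightarrow> lift_trm i (subst_trm k s u) = subst_trm k (lift_trm i s) (lift_trm (Suc i) u)"
  by (induction u) auto

lemma subst_lift_trm: "subst_trm k s (lift_trm k u) = u"
  by (induction u) (auto simp: map_idI)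

lemma subst_subst_trm: "m \<le> k \<Longrightarrow> subst_trm k t (subst_trm m s u) = subst_trm m (subst_trm k t s) (subst_trm (Suc k) (lift_trm m t) u)"
  by (induction u) (auto simp: subst_lift_trm)

lemma lift_lift_fm: "i \<le> k \<Longrightarrow> lift_fm i (lift_fm k A) = lift_fm (Suc k) (lift_fm i A)"
  by (induction A arbitrary: i k) (auto simp: lift_lift_trm)

lemma lift_subst_fm_le: "i \<le> k \<Longrightarrow> lift_fm i (subst_fm k s A) = subst_fm (Suc k) (lift_trm i s) (lift_fm i A)"
  by (induction A arbitrary: i k s) (auto simp: lift_subst_trm_le lift_lift_trm)

lemma lift_subst_fm_ge: "k \<le> i \<Longrightarrow> lift_fm i (subst_fm k s A) = subst_fm k (lift_trm i s) (lift_fm (Suc i) A)"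
  by (induction A arbitrary: i k s) (auto simp: lift_subst_trm_ge lift_lift_trm)

lemma subst_lift_fm: "subst_fm k s (lift_fm k A) = A"
  by (induction A arbitrary: k s) (auto simp: subst_lift_trm map_idI)

lemma subst_subst_fm: "m \<le> k \<Longrightarrow> subst_fm k t (subst_fm m s A) = subst_fm m (subst_trm k t s) (subst_fm (Suc k) (lift_trm m t) A)"
  by (induction A arbitrary: m k s t) (auto simp: subst_subst_trm lift_subst_trm_le lift_lift_trm)


fun fsize :: "('r, 'f, 'p) fm \<Rightarrow> nat" where
  "fsize (Atom p ts) = 0"
| "fsize (Neg f A) = Suc (fsize A)"
| "fsize (Conj U A B) = Suc (fsize A + fsize B)"
| "fsize (Imp f U A B) = Suc (fsize A + fsize B)"
| "fsize (Forall U A) = Suc (fsize A)"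

lemma fsize_lift[simp]: "fsize (lift_fm k A) = fsize A"
  by (induction A arbitrary: k) auto

lemma fsize_subst[simp]: "fsize (subst_fm k t A) = fsize A"
  by (induction A arbitrary: k t) auto

lemma wf_lift[simp]: "wf_fm (lift_fm k A) = wf_fm A"
  by (induction A arbitrary: k) auto

lemma wf_subst[simp]: "wf_fm (subst_fm k t A) = wf_fm A"
  by (induction A arbitrary: k t) auto

lemma lift_seq_add[simp]: "lift_seq (A + B) = lift_seq A + lift_seq B"
  by (simp add: lift_seq_def)

lemma lift_seq_add_mset[simp]: "lift_seq (add_mset x A) = add_mset (case x of (R, B) \<Rightarrow> (R, lift_fm 0 B)) (lift_seq A)"
  by (simp add: lift_seq_def)

lemma lift_seq_empty[simp]: "lift_seq {#} = {#}"
  by (simp add: lift_seq_def)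

lemma lift_seq_rep[simp]: "lift_seq (replicate_mset m x) = replicate_mset m (case x of (R, B) \<Rightarrow> (R, lift_fm 0 B))"
  by (simp add: lift_seq_def)

section \<open>Weakening and contraction\<close>

lemma weaken: "derivable \<Gamma> \<Longrightarrow> derivable (\<Gamma> + \<Delta>)"
proof (induction arbitrary: \<Delta> rule: derivable.induct)
  case (Id Rs \<Gamma> p ts)
  then show ?case using derivable.Id[of Rs "\<Gamma> + \<Delta>" p ts]
    by (simp add: ac_simps)
next
  case (Weaken \<Gamma> R A)
  then show ?case using derivable.Weaken[of "\<Gamma> + \<Delta>" R A]
    by (simp add: ac_simps)
next
  case (NegR \<Gamma> f R A)
  then show ?case using derivable.NegR[of "\<Gamma> + \<Delta>" f R A]
    by (simp add: ac_simps)
next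
  case (ConjNegL R U \<Gamma> A B)
  then show ?case using derivable.ConjNegL[of R U "\<Gamma> + \<Delta>" A B]
    by (simp add: ac_simps)
next
  case (ConjNegR R U \<Gamma> B A)
  then show ?case using derivable.ConjNegR[of R U "\<Gamma> + \<Delta>" B A]
    by (simp add: ac_simps)
next
  case (ConjPos R U \<Gamma> A B)
  then show ?case using derivable.ConjPos[of R U "\<Gamma> + \<Delta>" A B]
    by (simp add: ac_simps)
next
  case (ImpNeg R U \<Gamma> f A B)
  then show ?case using derivable.ImpNeg[of R U "\<Gamma> + \<Delta>" f A B]
    by (simp add: ac_simps)
next
  case (ImpPos R U \<Gamma>1 f A \<Gamma>2 B)
  then show ?case using derivable.ImpPos[of R U "\<Gamma>1 + \<Delta>" f A \<Gamma>2 B]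
    by (simp add: ac_simps)
next
  case (ForallNeg R U \<Gamma> t A)
  then show ?case using derivable.ForallNeg[of R U "\<Gamma> + \<Delta>" t A]
    by (simp add: ac_simps)
next
  case (ForallPos R U \<Gamma> A)
  then show ?case using derivable.ForallPos[of R U "\<Gamma> + \<Delta>" A]
    by (simp add: ac_simps)
qed

lemma weaken_sub: "derivable \<Gamma> \<Longrightarrow> \<Gamma> \<subseteq># \<Delta> \<Longrightarrow> derivable \<Delta>"
  by (metis subset_mset.add_diff_inverse weaken)

lemma contract1: "derivable (add_mset x (add_mset x \<Gamma>)) \<Longrightarrow> derivable (add_mset x \<Gamma>)"
  using derivable.Weaken[of \<Gamma> "fst x" "snd x"] by simp

lemma contract: "derivable (\<Gamma> + \<Delta> + \<Delta>) \<Longrightarrow> derivable (\<Gamma> + \<Delta>)"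
proof (induction \<Delta> arbitrary: \<Gamma>)
  case empty
  then show ?case by simp
next
  case (add x \<Delta>)
  have "derivable (add_mset x (add_mset x (\<Gamma> + \<Delta> + \<Delta>)))" using add.prems by simp
  then have "derivable (add_mset x (\<Gamma> + \<Delta> + \<Delta>))" by (rule contract1)
  then have "derivable ((add_mset x \<Gamma>) + \<Delta> + \<Delta>)" by simp
  then have "derivable ((add_mset x \<Gamma>) + \<Delta>)" by (rule add.IH)
  then show ?case by simp
qed

section \<open>Mapping formula transformations over derivations\<close>

lemma derivable_map:
  fixes \<Phi> :: "'i \<Rightarrow> ('r, 'f, 'p) fm \<Rightarrow> ('r, 'f, 'p) fm"
  assumes "derivable \<Gamma>"
    and hA: "\<And>k p ts. \<Phi> k (Atom p ts) = Atom p (map (g k) ts)"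
    and hN: "\<And>k f A. \<Phi> k (Neg f A) = Neg f (\<Phi> k A)"
    and hC: "\<And>k U A B. \<Phi> k (Conj U A B) = Conj U (\<Phi> k A) (\<Phi> k B)"
    and hI: "\<And>k f U A B. \<Phi> k (Imp f U A B) = Imp f U (\<Phi> k A) (\<Phi> k B)"
    and hF: "\<And>k U A. \<Phi> k (Forall U A) = Forall U (\<Phi> (nx k) A)"
    and hL: "\<And>k B. \<Phi> (nx k) (lift_fm 0 B) = lift_fm 0 (\<Phi> k B)"
    and hS: "\<And>k t A. \<Phi> k (subst_fm 0 t A) = subst_fm 0 (h k t) (\<Phi> (nx k) A)"
  shows "derivable (image_mset (\<lambda>(R, B). (R, \<Phi> k B)) \<Gamma>)"
  using assms(1)
proof (induction arbitrary: k rule: derivable.induct)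
  case (Id Rs \<Gamma> p ts)
  have "image_mset (\<lambda>(R, B). (R, \<Phi> k B)) (\<Gamma> + mset (map (\<lambda>R. (R, Atom p ts)) Rs)) = image_mset (\<lambda>(R, B). (R, \<Phi> k B)) \<Gamma> + mset (map (\<lambda>R. (R, Atom p (map (g k) ts))) Rs)"
    by (induction Rs) (auto simp: hA)
  then show ?case using derivable.Id[OF Id(1-3), of "image_mset (\<lambda>(R, B). (R, \<Phi> k B)) \<Gamma>" p "map (g k) ts"]
    by simp
next
  case (Weaken \<Gamma> R A)
  then show ?case using derivable.Weaken by fastforce
next
  case (NegR \<Gamma> f R A)
  then show ?case using derivable.NegR by (fastforce simp: hN)
next
  case (ConjNegL R U \<Gamma> A B)
  then show ?case using derivable.ConjNegL by (fastforce simp: hC)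
next
  case (ConjNegR R U \<Gamma> B A)
  then show ?case using derivable.ConjNegR by (fastforce simp: hC)
next
  case (ConjPos R U \<Gamma> A B)
  then show ?case using derivable.ConjPos by (fastforce simp: hC)
next
  case (ImpNeg R U \<Gamma> f A B)
  then show ?case using derivable.ImpNeg[of R U _ f] by (fastforce simp: hI)
next
  case (ImpPos R U \<Gamma>1 f A \<Gamma>2 B)
  then show ?case using derivable.ImpPos[of R U _ f] by (fastforce simp: hI)
next
  case (ForallNeg R U \<Gamma> t A)
  have "derivable (image_mset (\<lambda>(R, B). (R, \<Phi> k B)) \<Gamma> + {#(R, subst_fm 0 (h k t) (\<Phi> (nx k) A))#})"
    using ForallNeg.IH[of k] by (simp add: hS)
  then show ?case using derivable.ForallNeg[OF ForallNeg(1)] by (simp add: hF)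
next
  case (ForallPos R U \<Gamma> A)
  have e: "image_mset (\<lambda>(R, B). (R, \<Phi> (nx k) B)) (lift_seq \<Gamma>) = lift_seq (image_mset (\<lambda>(R, B). (R, \<Phi> k B)) \<Gamma>)"
    by (auto simp: lift_seq_def hL multiset.map_comp intro!: multiset.map_cong)
  have "derivable (lift_seq (image_mset (\<lambda>(R, B). (R, \<Phi> k B)) \<Gamma>) + {#(R, \<Phi> (nx k) A)#})"
    using ForallPos.IH[of "nx k"] e by simp
  then show ?case using derivable.ForallPos[OF ForallPos(1)] by (simp add: hF)
qed

definition lift_seqk :: "nat \<Rightarrow> ('r, 'f, 'p) sequent \<Rightarrow> ('r, 'f, 'p) sequent" where
  "lift_seqk k \<Gamma> = image_mset (\<lambda>(R, B). (R, lift_fm k B)) \<Gamma>"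

lemma derivable_lift: "derivable \<Gamma> \<Longrightarrow> derivable (lift_seq \<Gamma>)"
  using derivable_map[of \<Gamma> lift_fm lift_trm Suc lift_trm 0]
  by (simp add: lift_seq_def lift_lift_fm lift_subst_fm_ge)

lemma derivable_subst: "derivable \<Gamma> \<Longrightarrow> derivable (image_mset (\<lambda>(R, B). (R, subst_fm 0 t B)) \<Gamma>)"
  using derivable_map[of \<Gamma> "\<lambda>(k, t). subst_fm k t" "\<lambda>(k,t). subst_trm k t" "\<lambda>(k, t). (Suc k, lift_trm 0 t)"
     "\<lambda>(k,t) s. subst_trm k t s" "(0, t)"]
  by (simp add: split_beta lift_subst_fm_le[symmetric] subst_subst_fm)

lemma subst_lift_seq: "image_mset (\<lambda>(R, B). (R, subst_fm 0 t B)) (lift_seq \<Gamma>) = \<Gamma>"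
  by (induction \<Gamma>) (auto simp: subst_lift_fm)


lemma split_occ:
  assumes "add_mset X \<Gamma> = \<Delta> + replicate_mset m Y"
  shows "(X = Y \<and> 0 < m \<and> \<Gamma> = \<Delta> + replicate_mset (m - 1) Y) \<or> (X \<in># \<Delta> \<and> \<Gamma> = (\<Delta> - {#X#}) + replicate_mset m Y)"
proof (cases "X = Y \<and> 0 < m")
  case True
  then obtain k where k: "m = Suc k" by (cases m) auto
  then show ?thesis using assms True by simp
next
  case False
  then have "X \<in># \<Delta>" using assms
    by (metis add_mset_add_single in_replicate_mset union_iff union_single_eq_member)
  then show ?thesis using assms
    by (metis add_mset_remove_trivial insert_DiffM union_mset_add_mset_left)
qed

lemma split_sum:
  assumes "\<Gamma>1 + \<Gamma>2 = \<Delta> + replicate_mset m Y"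
  shows "\<exists>\<Delta>1 \<Delta>2 m1 m2. \<Gamma>1 = \<Delta>1 + replicate_mset m1 Y \<and> \<Gamma>2 = \<Delta>2 + replicate_mset m2 Y \<and> \<Delta> = \<Delta>1 + \<Delta>2"
proof -
  define m1 where "m1 = min (count \<Gamma>1 Y) m"
  define m2 where "m2 = m - m1"
  have c: "count \<Gamma>1 Y + count \<Gamma>2 Y = count \<Delta> Y + m"
    using arg_cong[OF assms, of "\<lambda>M. count M Y"] by simp
  have s1: "replicate_mset m1 Y \<subseteq># \<Gamma>1"
    by (simp add: m1_def count_le_replicate_mset_subset_eq[symmetric])
  have s2: "replicate_mset m2 Y \<subseteq># \<Gamma>2"
    using c by (simp add: m2_def m1_def count_le_replicate_mset_subset_eq[symmetric])
  define \<Delta>1 where "\<Delta>1 = \<Gamma>1 - replicate_mset m1 Y"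
  define \<Delta>2 where "\<Delta>2 = \<Gamma>2 - replicate_mset m2 Y"
  have e1: "\<Gamma>1 = \<Delta>1 + replicate_mset m1 Y" using s1 by (simp add: \<Delta>1_def)
  have e2: "\<Gamma>2 = \<Delta>2 + replicate_mset m2 Y" using s2 by (simp add: \<Delta>2_def)
  have "m1 + m2 = m" by (simp add: m1_def m2_def)
  then have "replicate_mset m Y = replicate_mset m1 Y + replicate_mset m2 Y"
    by (simp add: multiset_eq_iff)
  then have "\<Delta> = \<Delta>1 + \<Delta>2" using assms e1 e2
    by (metis add.assoc add.commute add_right_imp_eq)
  then show ?thesis using e1 e2 by blast
qed

lemma split_occ':
  assumes "\<Gamma> + {#X#} = \<Delta> + replicate_mset m Y"
  shows "(X = Y \<and> 0 < m \<and> \<Gamma> = \<Delta> + replicate_mset (m - 1) Y) \<or> (X \<in># \<Delta> \<and> \<Gamma> = (\<Delta> - {#X#}) + replicate_mset m Y)"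
  using split_occ[of X \<Gamma> \<Delta> m Y] assms by simp

definition liftI :: "'r set \<times> ('r, 'f, 'p) fm \<Rightarrow> 'r set \<times> ('r, 'f, 'p) fm" where
  "liftI = (\<lambda>(R, B). (R, lift_fm 0 B))"

lemma lift_seq_liftI: "lift_seq \<Gamma> = image_mset liftI \<Gamma>"
  by (simp add: lift_seq_def liftI_def)

lemma back_eq: "X \<in># \<Delta> \<Longrightarrow> \<Delta> - {#X#} = M \<Longrightarrow> \<Delta> = add_mset X M"
  by auto

lemma back_in: "derivable ((\<Delta> - {#X#}) + F + {#X#}) \<Longrightarrow> X \<in># \<Delta> \<Longrightarrow> derivable (\<Delta> + F)"
proof -
  assume "derivable ((\<Delta> - {#X#}) + F + {#X#})" "X \<in># \<Delta>"
  moreover have "(\<Delta> - {#X#}) + F + {#X#} = \<Delta> + F" using \<open>X \<in># \<Delta>\<close>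
    by (simp add: insert_DiffM2 union_mset_add_mset_left)
  ultimately show ?thesis by simp
qed

lemma back_in2: "derivable (add_mset X \<Delta> + F) \<Longrightarrow> X \<in># \<Delta> \<Longrightarrow> derivable (\<Delta> + F)"
proof -
  assume d: "derivable (add_mset X \<Delta> + F)" and x: "X \<in># \<Delta>"
  then have "add_mset X \<Delta> + F = add_mset X (add_mset X ((\<Delta> - {#X#}) + F))"
    by (simp add: insert_DiffM2 union_mset_add_mset_left)
  then have "derivable (add_mset X (add_mset X ((\<Delta> - {#X#}) + F)))" using d by (simp only:)
  then have "derivable (add_mset X ((\<Delta> - {#X#}) + F))" by (rule contract1)
  moreover have "add_mset X ((\<Delta> - {#X#}) + F) = \<Delta> + F" using x
    by (simp add: insert_DiffM2 union_mset_add_mset_left)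
  ultimately show ?thesis by simp
qed

lemma replace:
  assumes D: "derivable S"
    and lift: "\<And>Y F. Rel Y F \<Longrightarrow> Rel (liftI Y) (lift_seq F)"
    and hId: "\<And>Y F \<Gamma> Rs p ts \<Delta> m. Rel Y F \<Longrightarrow> Rs \<noteq> [] \<Longrightarrow>
         \<forall>i < length Rs. \<forall>j < length Rs. i \<noteq> j \<longrightarrow> Rs ! i \<inter> Rs ! j = {} \<Longrightarrow>
         \<Union> (set Rs) = UNIV \<Longrightarrow> \<Gamma> + mset (map (\<lambda>R. (R, Atom p ts)) Rs) = \<Delta> + replicate_mset m Y \<Longrightarrow> derivable (\<Delta> + F)"
    and hNeg: "\<And>Y F \<Delta> R f A. Rel Y F \<Longrightarrow> Y = (R, Neg f A) \<Longrightarrow> derivable (add_mset (f -` R, A) (\<Delta> + F)) \<Longrightarrow> derivable (\<Delta> + F)"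
    and hCNL: "\<And>Y F \<Delta> R U A B. Rel Y F \<Longrightarrow> Y = (R, Conj U A B) \<Longrightarrow> R \<notin> U \<Longrightarrow> derivable (add_mset (R, A) (\<Delta> + F)) \<Longrightarrow> derivable (\<Delta> + F)"
    and hCNR: "\<And>Y F \<Delta> R U A B. Rel Y F \<Longrightarrow> Y = (R, Conj U A B) \<Longrightarrow> R \<notin> U \<Longrightarrow> derivable (add_mset (R, B) (\<Delta> + F)) \<Longrightarrow> derivable (\<Delta> + F)"
    and hCP: "\<And>Y F \<Delta> R U A B. Rel Y F \<Longrightarrow> Y = (R, Conj U A B) \<Longrightarrow> R \<in> U \<Longrightarrow> derivable (add_mset (R, A) (\<Delta> + F)) \<Longrightarrow> derivable (add_mset (R, B) (\<Delta> + F)) \<Longrightarrow> derivable (\<Delta> + F)"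
    and hIN: "\<And>Y F \<Delta> R U f A B. Rel Y F \<Longrightarrow> Y = (R, Imp f U A B) \<Longrightarrow> R \<notin> U \<Longrightarrow> derivable (add_mset (f -` R, A) (add_mset (R, B) (\<Delta> + F))) \<Longrightarrow> derivable (\<Delta> + F)"
    and hIP: "\<And>Y F \<Delta>1 \<Delta>2 R U f A B. Rel Y F \<Longrightarrow> Y = (R, Imp f U A B) \<Longrightarrow> R \<in> U \<Longrightarrow> derivable (add_mset (f -` R, A) (\<Delta>1 + F)) \<Longrightarrow> derivable (add_mset (R, B) (\<Delta>2 + F)) \<Longrightarrow> derivable (\<Delta>1 + \<Delta>2 + F)"
    and hFN: "\<And>Y F \<Delta> R U t A. Rel Y F \<Longrightarrow> Y = (R, Forall U A) \<Longrightarrow> R \<notin> U \<Longrightarrow> derivable (add_mset (R, subst_fm 0 t A) (\<Delta> + F)) \<Longrightarrow> derivable (\<Delta> + F)"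
    and hFP: "\<And>Y F \<Delta> R U A. Rel Y F \<Longrightarrow> Y = (R, Forall U A) \<Longrightarrow> R \<in> U \<Longrightarrow> derivable (add_mset (R, A) (lift_seq (\<Delta> + F))) \<Longrightarrow> derivable (\<Delta> + F)"
  shows "S = \<Delta> + replicate_mset m Y \<Longrightarrow> Rel Y F \<Longrightarrow> derivable (\<Delta> + F)"
  using D
proof (induction arbitrary: \<Delta> m Y F rule: derivable.induct)
  case (Id Rs \<Gamma> p ts)
  then show ?case by (intro hId[OF Id.prems(2) Id.hyps(1-3) Id.prems(1)])
next
  case (Weaken \<Gamma> R A)
  from split_occ'[OF Weaken.prems(1)] show ?case
  proof (elim disjE conjE)
    assume a: "(R, A) = Y" "0 < m" "\<Gamma> = \<Delta> + replicate_mset (m - 1) Y"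
    then have "\<Gamma> + {#(R, A), (R, A)#} = \<Delta> + replicate_mset (Suc m) Y" by (cases m) auto
    then show ?thesis by (rule Weaken.IH[OF _ Weaken.prems(2)])
  next
    assume a: "(R, A) \<in># \<Delta>" "\<Gamma> = \<Delta> - {#(R, A)#} + replicate_mset m Y"
    then have "\<Gamma> + {#(R, A), (R, A)#} = add_mset (R, A) \<Delta> + replicate_mset m Y" by simp
    then have "derivable (add_mset (R, A) \<Delta> + F)" by (rule Weaken.IH[OF _ Weaken.prems(2)])
    then show ?thesis using a(1) by (rule back_in2)
  qed
next
  case (NegR \<Gamma> f R A)
  from split_occ'[OF NegR.prems(1)] show ?case
  proof (elim disjE conjE)
    assume a: "(R, Neg f A) = Y" "0 < m" "\<Gamma> = \<Delta> + replicate_mset (m - 1) Y"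
    then have "\<Gamma> + {#(f -` R, A)#} = add_mset (f -` R, A) \<Delta> + replicate_mset (m - 1) Y" by simp
    then have "derivable (add_mset (f -` R, A) \<Delta> + F)" by (rule NegR.IH[OF _ NegR.prems(2)])
    then have d: "derivable (add_mset (f -` R, A) (\<Delta> + F))" by simp
    show ?thesis by (rule hNeg[OF NegR.prems(2) a(1)[symmetric] d])
  next
    assume a: "(R, Neg f A) \<in># \<Delta>" "\<Gamma> = \<Delta> - {#(R, Neg f A)#} + replicate_mset m Y"
    then have "\<Gamma> + {#(f -` R, A)#} = add_mset (f -` R, A) (\<Delta> - {#(R, Neg f A)#}) + replicate_mset m Y" by simp
    then have "derivable (add_mset (f -` R, A) (\<Delta> - {#(R, Neg f A)#}) + F)" by (rule NegR.IH[OF _ NegR.prems(2)])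
    then have "derivable ((\<Delta> - {#(R, Neg f A)#}) + F + {#(R, Neg f A)#})"
      using derivable.NegR[of "(\<Delta> - {#(R, Neg f A)#}) + F" f R A] by simp
    then show ?thesis using a(1) by (rule back_in)
  qed
next
  case (ConjNegL R U \<Gamma> A B)
  from split_occ'[OF ConjNegL.prems(1)] show ?case
  proof (elim disjE conjE)
    assume a: "(R, Conj U A B) = Y" "0 < m" "\<Gamma> = \<Delta> + replicate_mset (m - 1) Y"
    then have "\<Gamma> + {#(R, A)#} = add_mset (R, A) \<Delta> + replicate_mset (m - 1) Y" by simp
    then have "derivable (add_mset (R, A) \<Delta> + F)" by (rule ConjNegL.IH[OF _ ConjNegL.prems(2)])
    then have d: "derivable (add_mset (R, A) (\<Delta> + F))" by simp
    show ?thesis by (rule hCNL[OF ConjNegL.prems(2) a(1)[symmetric] ConjNegL(1) d])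
  next
    let ?X = "(R, Conj U A B)"
    assume a: "?X \<in># \<Delta>" "\<Gamma> = \<Delta> - {#?X#} + replicate_mset m Y"
    then have "\<Gamma> + {#(R, A)#} = add_mset (R, A) (\<Delta> - {#?X#}) + replicate_mset m Y" by simp
    then have "derivable (add_mset (R, A) (\<Delta> - {#?X#}) + F)" by (rule ConjNegL.IH[OF _ ConjNegL.prems(2)])
    then have "derivable ((\<Delta> - {#?X#}) + F + {#?X#})"
      using derivable.ConjNegL[OF ConjNegL(1), of "(\<Delta> - {#?X#}) + F" A B] by simp
    then show ?thesis using a(1) by (rule back_in)
  qed
next
  case (ConjNegR R U \<Gamma> B A)
  from split_occ'[OF ConjNegR.prems(1)] show ?case
  proof (elim disjE conjE)
    assume a: "(R, Conj U A B) = Y" "0 < m" "\<Gamma> = \<Delta> + replicate_mset (m - 1) Y"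
    then have "\<Gamma> + {#(R, B)#} = add_mset (R, B) \<Delta> + replicate_mset (m - 1) Y" by simp
    then have "derivable (add_mset (R, B) \<Delta> + F)" by (rule ConjNegR.IH[OF _ ConjNegR.prems(2)])
    then have d: "derivable (add_mset (R, B) (\<Delta> + F))" by simp
    show ?thesis by (rule hCNR[OF ConjNegR.prems(2) a(1)[symmetric] ConjNegR(1) d])
  next
    let ?X = "(R, Conj U A B)"
    assume a: "?X \<in># \<Delta>" "\<Gamma> = \<Delta> - {#?X#} + replicate_mset m Y"
    then have "\<Gamma> + {#(R, B)#} = add_mset (R, B) (\<Delta> - {#?X#}) + replicate_mset m Y" by simp
    then have "derivable (add_mset (R, B) (\<Delta> - {#?X#}) + F)" by (rule ConjNegR.IH[OF _ ConjNegR.prems(2)])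
    then have "derivable ((\<Delta> - {#?X#}) + F + {#?X#})"
      using derivable.ConjNegR[OF ConjNegR(1), of "(\<Delta> - {#?X#}) + F" B A] by simp
    then show ?thesis using a(1) by (rule back_in)
  qed
next
  case (ConjPos R U \<Gamma> A B)
  from split_occ'[OF ConjPos.prems(1)] show ?case
  proof (elim disjE conjE)
    assume a: "(R, Conj U A B) = Y" "0 < m" "\<Gamma> = \<Delta> + replicate_mset (m - 1) Y"
    then have "\<Gamma> + {#(R, A)#} = add_mset (R, A) \<Delta> + replicate_mset (m - 1) Y"
      "\<Gamma> + {#(R, B)#} = add_mset (R, B) \<Delta> + replicate_mset (m - 1) Y" by simp_all
    then have "derivable (add_mset (R, A) \<Delta> + F)" "derivable (add_mset (R, B) \<Delta> + F)"
      using ConjPos.IH[OF _ ConjPos.prems(2)] by blast+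
    then have d: "derivable (add_mset (R, A) (\<Delta> + F))" "derivable (add_mset (R, B) (\<Delta> + F))" by simp_all
    show ?thesis by (rule hCP[OF ConjPos.prems(2) a(1)[symmetric] ConjPos(1) d])
  next
    let ?X = "(R, Conj U A B)"
    assume a: "?X \<in># \<Delta>" "\<Gamma> = \<Delta> - {#?X#} + replicate_mset m Y"
    then have "\<Gamma> + {#(R, A)#} = add_mset (R, A) (\<Delta> - {#?X#}) + replicate_mset m Y"
      "\<Gamma> + {#(R, B)#} = add_mset (R, B) (\<Delta> - {#?X#}) + replicate_mset m Y" by simp_all
    then have "derivable (add_mset (R, A) (\<Delta> - {#?X#}) + F)" "derivable (add_mset (R, B) (\<Delta> - {#?X#}) + F)"
      using ConjPos.IH[OF _ ConjPos.prems(2)] by blast+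
    then have "derivable ((\<Delta> - {#?X#}) + F + {#?X#})"
      using derivable.ConjPos[OF ConjPos(1), of "(\<Delta> - {#?X#}) + F" A B] by simp
    then show ?thesis using a(1) by (rule back_in)
  qed
next
  case (ImpNeg R U \<Gamma> f A B)
  from split_occ'[OF ImpNeg.prems(1)] show ?case
  proof (elim disjE conjE)
    assume a: "(R, Imp f U A B) = Y" "0 < m" "\<Gamma> = \<Delta> + replicate_mset (m - 1) Y"
    then have "\<Gamma> + {#(f -` R, A), (R, B)#} = add_mset (f -` R, A) (add_mset (R, B) \<Delta>) + replicate_mset (m - 1) Y" by simp
    then have "derivable (add_mset (f -` R, A) (add_mset (R, B) \<Delta>) + F)" by (rule ImpNeg.IH[OF _ ImpNeg.prems(2)])
    then have d: "derivable (add_mset (f -` R, A) (add_mset (R, B) (\<Delta> + F)))" by simp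
    show ?thesis by (rule hIN[OF ImpNeg.prems(2) a(1)[symmetric] ImpNeg(1) d])
  next
    let ?X = "(R, Imp f U A B)"
    assume a: "?X \<in># \<Delta>" "\<Gamma> = \<Delta> - {#?X#} + replicate_mset m Y"
    then have "\<Gamma> + {#(f -` R, A), (R, B)#} = add_mset (f -` R, A) (add_mset (R, B) (\<Delta> - {#?X#})) + replicate_mset m Y" by simp
    then have "derivable (add_mset (f -` R, A) (add_mset (R, B) (\<Delta> - {#?X#})) + F)" by (rule ImpNeg.IH[OF _ ImpNeg.prems(2)])
    then have "derivable ((\<Delta> - {#?X#}) + F + {#?X#})"
      using derivable.ImpNeg[OF ImpNeg(1), of "(\<Delta> - {#?X#}) + F" f A B] by simp
    then show ?thesis using a(1) by (rule back_in)
  qed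
next
  case (ImpPos R U \<Gamma>1 f A \<Gamma>2 B)
  from split_occ'[OF ImpPos.prems(1)] show ?case
  proof (elim disjE conjE)
    assume a: "(R, Imp f U A B) = Y" "0 < m" "\<Gamma>1 + \<Gamma>2 = \<Delta> + replicate_mset (m - 1) Y"
    obtain \<Delta>1 \<Delta>2 m1 m2 where s: "\<Gamma>1 = \<Delta>1 + replicate_mset m1 Y" "\<Gamma>2 = \<Delta>2 + replicate_mset m2 Y" "\<Delta> = \<Delta>1 + \<Delta>2"
      using split_sum[OF a(3)] by blast
    have "\<Gamma>1 + {#(f -` R, A)#} = add_mset (f -` R, A) \<Delta>1 + replicate_mset m1 Y"
      "\<Gamma>2 + {#(R, B)#} = add_mset (R, B) \<Delta>2 + replicate_mset m2 Y" using s by simp_all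
    then have "derivable (add_mset (f -` R, A) \<Delta>1 + F)" "derivable (add_mset (R, B) \<Delta>2 + F)"
      using ImpPos.IH[OF _ ImpPos.prems(2)] by blast+
    then have d: "derivable (add_mset (f -` R, A) (\<Delta>1 + F))" "derivable (add_mset (R, B) (\<Delta>2 + F))" by simp_all
    show ?thesis unfolding s(3) by (rule hIP[OF ImpPos.prems(2) a(1)[symmetric] ImpPos(1) d])
  next
    let ?X = "(R, Imp f U A B)"
    assume a: "?X \<in># \<Delta>" "\<Gamma>1 + \<Gamma>2 = \<Delta> - {#?X#} + replicate_mset m Y"
    obtain \<Delta>1 \<Delta>2 m1 m2 where s: "\<Gamma>1 = \<Delta>1 + replicate_mset m1 Y" "\<Gamma>2 = \<Delta>2 + replicate_mset m2 Y" "\<Delta> - {#?X#} = \<Delta>1 + \<Delta>2"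
      using split_sum[OF a(2)] by blast
    have "\<Gamma>1 + {#(f -` R, A)#} = add_mset (f -` R, A) \<Delta>1 + replicate_mset m1 Y"
      "\<Gamma>2 + {#(R, B)#} = add_mset (R, B) \<Delta>2 + replicate_mset m2 Y" using s by simp_all
    then have "derivable (add_mset (f -` R, A) \<Delta>1 + F)" "derivable (add_mset (R, B) \<Delta>2 + F)"
      using ImpPos.IH[OF _ ImpPos.prems(2)] by blast+
    then have "derivable ((\<Delta>1 + F) + (\<Delta>2 + F) + {#?X#})"
      using derivable.ImpPos[OF ImpPos(1), of "\<Delta>1 + F" f A "\<Delta>2 + F" B] by simp
    then have "derivable (add_mset ?X (\<Delta>1 + \<Delta>2) + F + F)" by (simp add: ac_simps)
    then have d: "derivable (add_mset ?X (\<Delta>1 + \<Delta>2) + F)" by (rule contract)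
    have "\<Delta> = add_mset ?X (\<Delta>1 + \<Delta>2)" by (rule back_eq[OF a(1) s(3)])
    with d show ?thesis by simp
  qed
next
  case (ForallNeg R U \<Gamma> t A)
  from split_occ'[OF ForallNeg.prems(1)] show ?case
  proof (elim disjE conjE)
    assume a: "(R, Forall U A) = Y" "0 < m" "\<Gamma> = \<Delta> + replicate_mset (m - 1) Y"
    then have "\<Gamma> + {#(R, subst_fm 0 t A)#} = add_mset (R, subst_fm 0 t A) \<Delta> + replicate_mset (m - 1) Y" by simp
    then have "derivable (add_mset (R, subst_fm 0 t A) \<Delta> + F)" by (rule ForallNeg.IH[OF _ ForallNeg.prems(2)])
    then have d: "derivable (add_mset (R, subst_fm 0 t A) (\<Delta> + F))" by simp
    show ?thesis by (rule hFN[OF ForallNeg.prems(2) a(1)[symmetric] ForallNeg(1) d])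
  next
    let ?X = "(R, Forall U A)"
    assume a: "?X \<in># \<Delta>" "\<Gamma> = \<Delta> - {#?X#} + replicate_mset m Y"
    then have "\<Gamma> + {#(R, subst_fm 0 t A)#} = add_mset (R, subst_fm 0 t A) (\<Delta> - {#?X#}) + replicate_mset m Y" by simp
    then have "derivable (add_mset (R, subst_fm 0 t A) (\<Delta> - {#?X#}) + F)" by (rule ForallNeg.IH[OF _ ForallNeg.prems(2)])
    then have "derivable ((\<Delta> - {#?X#}) + F + {#?X#})"
      using derivable.ForallNeg[OF ForallNeg(1), of "(\<Delta> - {#?X#}) + F" t A] by simp
    then show ?thesis using a(1) by (rule back_in)
  qed
next
  case (ForallPos R U \<Gamma> A)
  from split_occ'[OF ForallPos.prems(1)] show ?case
  proof (elim disjE conjE)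
    assume a: "(R, Forall U A) = Y" "0 < m" "\<Gamma> = \<Delta> + replicate_mset (m - 1) Y"
    then have "lift_seq \<Gamma> + {#(R, A)#} = add_mset (R, A) (lift_seq \<Delta>) + replicate_mset (m - 1) (liftI Y)"
      by (simp add: lift_seq_liftI)
    moreover have "Rel (liftI Y) (lift_seq F)" by (rule lift[OF ForallPos.prems(2)])
    ultimately have "derivable (add_mset (R, A) (lift_seq \<Delta>) + lift_seq F)" by (rule ForallPos.IH)
    then have d: "derivable (add_mset (R, A) (lift_seq (\<Delta> + F)))" by simp
    show ?thesis by (rule hFP[OF ForallPos.prems(2) a(1)[symmetric] ForallPos(1) d])
  next
    let ?X = "(R, Forall U A)"
    assume a: "?X \<in># \<Delta>" "\<Gamma> = \<Delta> - {#?X#} + replicate_mset m Y"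
    have "lift_seq \<Gamma> + {#(R, A)#} = add_mset (R, A) (lift_seq (\<Delta> - {#?X#})) + replicate_mset m (liftI Y)"
      unfolding a(2) lift_seq_add lift_seq_rep by (simp add: liftI_def)
    moreover have "Rel (liftI Y) (lift_seq F)" by (rule lift[OF ForallPos.prems(2)])
    ultimately have "derivable (add_mset (R, A) (lift_seq (\<Delta> - {#?X#})) + lift_seq F)" by (rule ForallPos.IH)
    then have "derivable ((\<Delta> - {#?X#}) + F + {#?X#})"
      using derivable.ForallPos[OF ForallPos(1), of "(\<Delta> - {#?X#}) + F" A] by simp
    then show ?thesis using a(1) by (rule back_in)
  qed
qed


lemma fam_filter_sub:
  assumes e: "\<Gamma> + mset (map g Ss) = \<Delta> + replicate_mset m Y"
  shows "mset (map g (filter (\<lambda>S. g S \<noteq> Y) Ss)) \<subseteq># \<Delta>"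
proof -
  have f: "mset (map g (filter (\<lambda>S. g S \<noteq> Y) Ss)) = filter_mset (\<lambda>z. z \<noteq> Y) (mset (map g Ss))"
    by (induction Ss) auto
  show ?thesis unfolding f subseteq_mset_def
  proof
    fix z
    have "count (mset (map g Ss)) z \<le> count \<Delta> z + (if z = Y then m else 0)"
      using arg_cong[OF e, of "\<lambda>M. count M z"] by simp
    then show "count (filter_mset (\<lambda>z. z \<noteq> Y) (mset (map g Ss))) z \<le> count \<Delta> z" by auto
  qed
qed

lemma derivable_Id_sub:
  assumes "Rs \<noteq> []" "\<forall>i < length Rs. \<forall>j < length Rs. i \<noteq> j \<longrightarrow> Rs ! i \<inter> Rs ! j = {}"
    "\<Union> (set Rs) = UNIV" "mset (map (\<lambda>R. (R, Atom p ts)) Rs) \<subseteq># \<Delta>"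
  shows "derivable \<Delta>"
proof -
  have "derivable ((\<Delta> - mset (map (\<lambda>R. (R, Atom p ts)) Rs)) + mset (map (\<lambda>R. (R, Atom p ts)) Rs))"
    by (rule derivable.Id[OF assms(1-3)])
  then show ?thesis using assms(4) by (simp add: subset_mset.diff_add)
qed

lemma id_nonatom:
  assumes "\<Gamma> + mset (map (\<lambda>R. (R, Atom p ts)) Rs) = \<Delta> + replicate_mset m Y"
    "Rs \<noteq> []" "\<forall>i < length Rs. \<forall>j < length Rs. i \<noteq> j \<longrightarrow> Rs ! i \<inter> Rs ! j = {}"
    "\<Union> (set Rs) = UNIV" "\<forall>p ts. snd Y \<noteq> Atom p ts"
  shows "derivable (\<Delta> + F)"
proof -
  have "filter (\<lambda>S. (S, Atom p ts) \<noteq> Y) Rs = Rs" using assms(5) by (auto intro: filter_True)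
  then have "mset (map (\<lambda>R. (R, Atom p ts)) Rs) \<subseteq># \<Delta>"
    using fam_filter_sub[OF assms(1)] by simp
  then have "derivable \<Delta>" by (rule derivable_Id_sub[OF assms(2-4)])
  then show ?thesis by (rule weaken)
qed

lemma absorb: "derivable (add_mset x (\<Delta> + F)) \<Longrightarrow> x \<in># F \<Longrightarrow> derivable (\<Delta> + F)"
proof -
  assume d: "derivable (add_mset x (\<Delta> + F))" and x: "x \<in># F"
  have e: "add_mset x (\<Delta> + F) = add_mset x (add_mset x (\<Delta> + (F - {#x#})))"
    using x by (simp add: insert_DiffM)
  have "derivable (add_mset x (add_mset x (\<Delta> + (F - {#x#}))))" using d unfolding e .
  then have "derivable (add_mset x (\<Delta> + (F - {#x#})))" by (rule contract1)
  moreover have "add_mset x (\<Delta> + (F - {#x#})) = \<Delta> + F" using x by (simp add: insert_DiffM)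
  ultimately show ?thesis by simp
qed

lemma contract_set: "derivable (N + K) \<Longrightarrow> set_mset K \<subseteq> set_mset N \<Longrightarrow> derivable N"
proof (induction K)
  case empty
  then show ?case by simp
next
  case (add k K)
  have "derivable (add_mset k ({#} + (N + K)))" using add.prems(1) by simp
  then have "derivable ({#} + (N + K))" by (rule absorb) (use add.prems(2) in auto)
  then show ?case using add.IH add.prems(2) by simp
qed

lemma struct: "derivable M \<Longrightarrow> set_mset M \<subseteq> set_mset N \<Longrightarrow> derivable N"
  using weaken[of M N] contract_set[of N M] by (simp add: add.commute)

section \<open>Inversion lemmas\<close>

lemma inv_neg:
  assumes "derivable (\<Gamma> + {#(R, Neg f A)#})"
  shows "derivable (\<Gamma> + {#(f -` R, A)#})"
proof -
  define Rel where "Rel Y F \<longleftrightarrow> (\<exists>R f A. Y = (R, Neg f A) \<and> F = {#(f -` R, A)#})"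
    for Y :: "'a set \<times> ('a, 'b, 'c) fm" and F :: "('a, 'b, 'c) sequent"
  show ?thesis
    apply (rule replace[OF assms, where Rel=Rel and \<Delta>=\<Gamma> and m=1 and Y="(R, Neg f A)" and F="{#(f -` R, A)#}"])
    subgoal by (auto simp: Rel_def liftI_def)
    subgoal by (erule id_nonatom) (auto simp: Rel_def)
    subgoal by (clarsimp simp: Rel_def) (erule struct; auto)
    by (auto simp: Rel_def)
qed

lemma inv_conj_pos:
  assumes "derivable (\<Gamma> + {#(R, Conj U A B)#})" "R \<in> U"
  shows "derivable (\<Gamma> + {#(R, A)#})"
proof -
  define Rel where "Rel Y F \<longleftrightarrow> (\<exists>R U A B. R \<in> U \<and> Y = (R, Conj U A B) \<and> F = {#(R, A)#})"
    for Y :: "'a set \<times> ('a, 'b, 'c) fm" and F :: "('a, 'b, 'c) sequent"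
  show ?thesis
    apply (rule replace[OF assms(1), where Rel=Rel and \<Delta>=\<Gamma> and m=1 and Y="(R, Conj U A B)" and F="{#(R, A)#}"])
    subgoal by (auto simp: Rel_def liftI_def)
    subgoal by (erule id_nonatom) (auto simp: Rel_def)
    subgoal by (auto simp: Rel_def)
    subgoal by (auto simp: Rel_def)
    subgoal by (auto simp: Rel_def)
    subgoal by (clarsimp simp: Rel_def) (erule struct; auto)
    using assms(2) by (auto simp: Rel_def)
qed

lemma inv_conj_neg:
  assumes "derivable (\<Gamma> + {#(R, Conj U A B)#})" "R \<notin> U"
  shows "derivable (\<Gamma> + {#(R, A), (R, B)#})"
proof -
  define Rel where "Rel Y F \<longleftrightarrow> (\<exists>R U A B. R \<notin> U \<and> Y = (R, Conj U A B) \<and> F = {#(R, A), (R, B)#})"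
    for Y :: "'a set \<times> ('a, 'b, 'c) fm" and F :: "('a, 'b, 'c) sequent"
  show ?thesis
    apply (rule replace[OF assms(1), where Rel=Rel and \<Delta>=\<Gamma> and m=1 and Y="(R, Conj U A B)" and F="{#(R, A), (R, B)#}"])
    subgoal by (auto simp: Rel_def liftI_def)
    subgoal by (erule id_nonatom) (auto simp: Rel_def)
    subgoal by (auto simp: Rel_def)
    subgoal by (clarsimp simp: Rel_def) (erule struct; auto)
    subgoal by (clarsimp simp: Rel_def) (erule struct; auto)
    subgoal by (auto simp: Rel_def)
    using assms(2) by (auto simp: Rel_def)
qed

lemma inv_imp_neg:
  assumes "derivable (\<Gamma> + {#(R, Imp f U A B)#})" "R \<notin> U"
  shows "derivable (\<Gamma> + {#(f -` R, A), (R, B)#})"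
proof -
  define Rel where "Rel Y F \<longleftrightarrow> (\<exists>R U f A B. R \<notin> U \<and> Y = (R, Imp f U A B) \<and> F = {#(f -` R, A), (R, B)#})"
    for Y :: "'a set \<times> ('a, 'b, 'c) fm" and F :: "('a, 'b, 'c) sequent"
  show ?thesis
    apply (rule replace[OF assms(1), where Rel=Rel and \<Delta>=\<Gamma> and m=1 and Y="(R, Imp f U A B)" and F="{#(f -` R, A), (R, B)#}"])
    subgoal by (auto simp: Rel_def liftI_def)
    subgoal by (erule id_nonatom) (auto simp: Rel_def)
    subgoal by (auto simp: Rel_def)
    subgoal by (auto simp: Rel_def)
    subgoal by (auto simp: Rel_def)
    subgoal by (auto simp: Rel_def)
    subgoal by (clarsimp simp: Rel_def) (erule struct; auto)
    using assms(2) by (auto simp: Rel_def)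
qed

lemma inv_imp_pos:
  assumes "derivable (\<Gamma> + {#(R, Imp f U A B)#})" "R \<in> U"
  shows "derivable (\<Gamma> + {#(f -` R, A)#})"
proof -
  define Rel where "Rel Y F \<longleftrightarrow> (\<exists>R U f A B. R \<in> U \<and> Y = (R, Imp f U A B) \<and> F = {#(f -` R, A)#})"
    for Y :: "'a set \<times> ('a, 'b, 'c) fm" and F :: "('a, 'b, 'c) sequent"
  have ab: "derivable (add_mset a (\<Delta>1 + {#a#})) \<Longrightarrow> derivable (\<Delta>1 + \<Delta>2 + {#a#})" for a \<Delta>1 \<Delta>2
  proof -
    assume "derivable (add_mset a (\<Delta>1 + {#a#}))"
    then have "derivable (\<Delta>1 + {#a#})" by (rule absorb) simp
    then have "derivable (\<Delta>1 + {#a#} + \<Delta>2)" by (rule weaken)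
    then show ?thesis by (simp add: ac_simps)
  qed
  show ?thesis
    apply (rule replace[OF assms(1), where Rel=Rel and \<Delta>=\<Gamma> and m=1 and Y="(R, Imp f U A B)" and F="{#(f -` R, A)#}"])
    subgoal by (auto simp: Rel_def liftI_def)
    subgoal by (erule id_nonatom) (auto simp: Rel_def)
    subgoal by (auto simp: Rel_def)
    subgoal by (auto simp: Rel_def)
    subgoal by (auto simp: Rel_def)
    subgoal by (auto simp: Rel_def)
    subgoal by (auto simp: Rel_def)
    subgoal by (clarsimp simp: Rel_def) (erule struct; auto)
    using assms(2) by (auto simp: Rel_def)
qed

lemma inv_forall_pos:
  assumes "derivable (\<Gamma> + {#(R, Forall U A)#})" "R \<in> U"
  shows "derivable (\<Gamma> + {#(R, subst_fm 0 t A)#})"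
proof -
  define Rel where "Rel Y F \<longleftrightarrow> (\<exists>R U A t. R \<in> U \<and> Y = (R, Forall U A) \<and> F = {#(R, subst_fm 0 t A)#})"
    for Y :: "'a set \<times> ('a, 'b, 'c) fm" and F :: "('a, 'b, 'c) sequent"
  have lf: "Rel (liftI Y) (lift_seq F)" if "Rel Y F" for Y F
  proof -
    from that obtain R U A t where "R \<in> U" "Y = (R, Forall U A)" "F = {#(R, subst_fm 0 t A)#}"
      unfolding Rel_def by blast
    then show ?thesis unfolding Rel_def
      by (intro exI[of _ R] exI[of _ U] exI[of _ "lift_fm 1 A"] exI[of _ "lift_trm 0 t"])
        (simp add: liftI_def lift_subst_fm_ge)
  qed
  have fp: "derivable (\<Delta> + F)" if "Rel Y F" "Y = (R', Forall U' A')" "derivable (add_mset (R', A') (lift_seq (\<Delta> + F)))"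
    for Y F \<Delta> R' U' A'
  proof -
    from that obtain t' where F: "F = {#(R', subst_fm 0 t' A')#}" unfolding Rel_def by blast
    have "derivable (image_mset (\<lambda>(R, B). (R, subst_fm 0 t' B)) (add_mset (R', A') (lift_seq (\<Delta> + F))))"
      by (rule derivable_subst[OF that(3)])
    then have "derivable (add_mset (R', subst_fm 0 t' A') (\<Delta> + F))"
      using subst_lift_seq[of t' "\<Delta> + F"] by simp
    then show ?thesis by (rule absorb) (simp add: F)
  qed
  show ?thesis
    apply (rule replace[OF assms(1), where Rel=Rel and \<Delta>=\<Gamma> and m=1 and Y="(R, Forall U A)" and F="{#(R, subst_fm 0 t A)#}"])
    subgoal by (rule lf)
    subgoal by (erule id_nonatom) (auto simp: Rel_def)
    subgoal by (auto simp: Rel_def)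
    subgoal by (auto simp: Rel_def)
    subgoal by (auto simp: Rel_def)
    subgoal by (auto simp: Rel_def)
    subgoal by (auto simp: Rel_def)
    subgoal by (auto simp: Rel_def)
    subgoal by (auto simp: Rel_def)
    subgoal by (rule fp)
    using assms(2) by (auto simp: Rel_def)
qed


definition rcnt :: "'r set list \<Rightarrow> 'r \<Rightarrow> nat" where
  "rcnt L x = length (filter (\<lambda>S. x \<in> S) L)"

lemma rcnt_simps[simp]: "rcnt [] x = 0" "rcnt (a # L) x = (if x \<in> a then 1 else 0) + rcnt L x"
  "rcnt (L1 @ L2) x = rcnt L1 x + rcnt L2 x"
  by (auto simp: rcnt_def)

lemma rcnt_zero: "rcnt L x = 0 \<longleftrightarrow> (\<forall>S\<in>set L. x \<notin> S)"
  by (induction L) auto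

lemma disj_Cons:
  "(\<forall>i<length (a # L). \<forall>j<length (a # L). i \<noteq> j \<longrightarrow> (a # L) ! i \<inter> (a # L) ! j = {}) \<longleftrightarrow>
   (\<forall>i<length L. \<forall>j<length L. i \<noteq> j \<longrightarrow> L ! i \<inter> L ! j = {}) \<and> (\<forall>S\<in>set L. a \<inter> S = {})"
proof
  assume H: "\<forall>i<length (a # L). \<forall>j<length (a # L). i \<noteq> j \<longrightarrow> (a # L) ! i \<inter> (a # L) ! j = {}"
  have 1: "\<forall>i<length L. \<forall>j<length L. i \<noteq> j \<longrightarrow> L ! i \<inter> L ! j = {}"
  proof (intro allI impI)
    fix i j assume "i < length L" "j < length L" "i \<noteq> j"
    then show "L ! i \<inter> L ! j = {}" using H[rule_format, of "Suc i" "Suc j"] by simp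
  qed
  have 2: "\<forall>S\<in>set L. a \<inter> S = {}"
  proof
    fix S assume "S \<in> set L"
    then obtain k where "k < length L" "S = L ! k" by (auto simp: in_set_conv_nth)
    then show "a \<inter> S = {}" using H[rule_format, of 0 "Suc k"] by simp
  qed
  show "(\<forall>i<length L. \<forall>j<length L. i \<noteq> j \<longrightarrow> L ! i \<inter> L ! j = {}) \<and> (\<forall>S\<in>set L. a \<inter> S = {})"
    using 1 2 by blast
next
  assume H: "(\<forall>i<length L. \<forall>j<length L. i \<noteq> j \<longrightarrow> L ! i \<inter> L ! j = {}) \<and> (\<forall>S\<in>set L. a \<inter> S = {})"
  show "\<forall>i<length (a # L). \<forall>j<length (a # L). i \<noteq> j \<longrightarrow> (a # L) ! i \<inter> (a # L) ! j = {}"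
  proof (intro allI impI)
    fix i j assume ij: "i < length (a # L)" "j < length (a # L)" "i \<noteq> j"
    show "(a # L) ! i \<inter> (a # L) ! j = {}"
    proof (cases i)
      case 0
      then obtain j' where "j = Suc j'" using ij by (cases j) auto
      then show ?thesis using 0 ij H by (auto simp: nth_mem)
    next
      case (Suc i')
      show ?thesis
      proof (cases j)
        case 0
        then show ?thesis using Suc ij H by (auto simp: nth_mem)
      next
        case (Suc j')
        then show ?thesis using \<open>i = Suc i'\<close> ij H by auto
      qed
    qed
  qed
qed

lemma disj_cnt: "(\<forall>i<length L. \<forall>j<length L. i \<noteq> j \<longrightarrow> L ! i \<inter> L ! j = {}) \<longleftrightarrow> (\<forall>x. rcnt L x \<le> 1)"
proof (induction L)
  case Nil
  then show ?case by simp
next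
  case (Cons a L)
  have X: "(\<forall>x. rcnt (a # L) x \<le> 1) \<longleftrightarrow> (\<forall>x. rcnt L x \<le> 1) \<and> (\<forall>S\<in>set L. a \<inter> S = {})"
  proof
    assume H: "\<forall>x. rcnt (a # L) x \<le> 1"
    have "rcnt L x \<le> 1" for x using H[rule_format, of x] by (simp split: if_splits)
    moreover have "a \<inter> S = {}" if "S \<in> set L" for S
    proof -
      have "x \<in> a \<Longrightarrow> rcnt L x = 0" for x using H[rule_format, of x] by simp
      then show ?thesis using that by (auto simp: rcnt_zero)
    qed
    ultimately show "(\<forall>x. rcnt L x \<le> 1) \<and> (\<forall>S\<in>set L. a \<inter> S = {})" by blast
  next
    assume H: "(\<forall>x. rcnt L x \<le> 1) \<and> (\<forall>S\<in>set L. a \<inter> S = {})"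
    show "\<forall>x. rcnt (a # L) x \<le> 1"
    proof
      fix x
      show "rcnt (a # L) x \<le> 1"
      proof (cases "x \<in> a")
        case True
        then have "rcnt L x = 0" using H by (auto simp: rcnt_zero)
        then show ?thesis by simp
      next
        case False
        then show ?thesis using H by simp
      qed
    qed
  qed
  show ?case by (simp only: disj_Cons Cons.IH X)
qed

lemma union_cnt: "\<Union> (set L) = UNIV \<longleftrightarrow> (\<forall>x. 1 \<le> rcnt L x)"
proof -
  have "1 \<le> rcnt L x \<longleftrightarrow> (\<exists>S\<in>set L. x \<in> S)" for x
    using rcnt_zero[of L x] by auto
  then show ?thesis by auto
qed

lemma idc_iff: "(L \<noteq> [] \<and> (\<forall>i<length L. \<forall>j<length L. i \<noteq> j \<longrightarrow> L ! i \<inter> L ! j = {}) \<and> \<Union> (set L) = UNIV)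
   \<longleftrightarrow> (\<forall>x. rcnt L x = 1)"
proof -
  have "(\<forall>x. rcnt L x = 1) \<Longrightarrow> L \<noteq> []" by (metis rcnt_simps(1) zero_neq_one)
  then show ?thesis unfolding disj_cnt union_cnt by (auto intro: antisym)
qed

lemma derivable_Id_cnt:
  assumes "\<forall>x. rcnt L x = 1" "mset (map (\<lambda>R. (R, Atom p ts)) L) \<subseteq># \<Delta>"
  shows "derivable \<Delta>"
proof -
  have h: "L \<noteq> [] \<and> (\<forall>i<length L. \<forall>j<length L. i \<noteq> j \<longrightarrow> L ! i \<inter> L ! j = {}) \<and> \<Union> (set L) = UNIV"
    by (subst idc_iff) (rule assms(1))
  show ?thesis by (rule derivable_Id_sub[OF _ _ _ assms(2)]) (use h in auto)
qed

lemma length_filter_split: "length (filter P xs) = length (filter (\<lambda>x. P x \<and> Q x) xs) + length (filter (\<lambda>x. P x \<and> \<not> Q x) xs)"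
  by (induction xs) auto

lemma cnt_remove:
  assumes "\<forall>x. rcnt L x = 1" "T \<in> set L"
  shows "rcnt (filter (\<lambda>S. S \<noteq> T) L) x = (if x \<in> T then 0 else 1)"
proof -
  have a: "rcnt (filter (\<lambda>S. S \<noteq> T) L) x = length (filter (\<lambda>S. x \<in> S \<and> S \<noteq> T) L)"
    by (simp add: rcnt_def filter_filter conj_commute)
  have b: "rcnt L x = length (filter (\<lambda>S. x \<in> S \<and> S \<noteq> T) L) + length (filter (\<lambda>S. x \<in> S \<and> \<not> S \<noteq> T) L)"
    unfolding rcnt_def by (rule length_filter_split)
  show ?thesis
  proof (cases "x \<in> T")
    case True
    then have "filter (\<lambda>S. x \<in> S \<and> \<not> S \<noteq> T) L \<noteq> []" using assms(2) by (auto simp: filter_empty_conv)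
    then have "length (filter (\<lambda>S. x \<in> S \<and> \<not> S \<noteq> T) L) \<ge> 1" by (simp add: Suc_le_eq)
    then show ?thesis using a b assms(1) True by simp
  next
    case False
    then have "filter (\<lambda>S. x \<in> S \<and> \<not> S \<noteq> T) L = []" by (auto simp: filter_empty_conv)
    then show ?thesis using a b assms(1) False by simp
  qed
qed

section \<open>Splitting atoms\<close>

lemma split_id:
  assumes e: "\<Gamma> + mset (map (\<lambda>R. (R, Atom p' ts')) Rs) = \<Delta> + replicate_mset m (T, Atom p ts)"
    and idc: "\<forall>x. rcnt Rs x = 1"
    and cv: "\<forall>x. rcnt Ss x = (if x \<in> T then 1 else 0)"
  shows "derivable (\<Delta> + mset (map (\<lambda>S. (S, Atom p ts)) Ss))"
proof (cases "(p', ts') = (p, ts) \<and> T \<in> set Rs")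
  case True
  then have pt: "p' = p" "ts' = ts" by auto
  define Ts where "Ts = filter (\<lambda>S. S \<noteq> T) Rs"
  have "mset (map (\<lambda>R. (R, Atom p ts)) (filter (\<lambda>S. (S, Atom p ts) \<noteq> (T, Atom p ts)) Rs)) \<subseteq># \<Delta>"
    using fam_filter_sub[OF e] pt by simp
  then have sub: "mset (map (\<lambda>R. (R, Atom p ts)) Ts) \<subseteq># \<Delta>" by (simp add: Ts_def)
  have c: "\<forall>x. rcnt (Ts @ Ss) x = 1"
  proof
    fix x show "rcnt (Ts @ Ss) x = 1"
      using cnt_remove[OF idc, of T x] True cv[rule_format, of x] by (simp add: Ts_def)
  qed
  have "mset (map (\<lambda>R. (R, Atom p ts)) (Ts @ Ss)) \<subseteq># \<Delta> + mset (map (\<lambda>S. (S, Atom p ts)) Ss)"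
    using sub by (simp add: subset_mset.add_right_mono)
  then show ?thesis by (rule derivable_Id_cnt[OF c])
next
  case False
  then have "filter (\<lambda>S. (S, Atom p' ts') \<noteq> (T, Atom p ts)) Rs = Rs" by (auto intro: filter_True)
  then have "mset (map (\<lambda>R. (R, Atom p' ts')) Rs) \<subseteq># \<Delta>" using fam_filter_sub[OF e] by simp
  then have "derivable \<Delta>" by (rule derivable_Id_cnt[OF idc])
  then show ?thesis by (rule weaken)
qed

lemma lift_seq_fam: "lift_seq (mset (map (\<lambda>S. (S, Atom p ts)) Ss)) = mset (map (\<lambda>S. (S, Atom p (map (lift_trm 0) ts))) Ss)"
  by (induction Ss) auto

lemma lift_seq_fam2[simp]: "lift_seq (image_mset (\<lambda>S. (S, Atom p ts)) M) = image_mset (\<lambda>S. (S, Atom p (map (lift_trm 0) ts))) M"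
  by (simp add: lift_seq_def multiset.map_comp comp_def)

lemma split_atom:
  assumes "derivable (\<Gamma> + {#(T, Atom p ts)#})" "\<forall>x. rcnt Ss x = (if x \<in> T then 1 else 0)"
  shows "derivable (\<Gamma> + mset (map (\<lambda>S. (S, Atom p ts)) Ss))"
proof -
  define Rel where "Rel Y F \<longleftrightarrow> (\<exists>T p ts Ss. Y = (T, Atom p ts) \<and> F = mset (map (\<lambda>S. (S, Atom p ts)) Ss) \<and> (\<forall>x. rcnt Ss x = (if x \<in> T then 1 else 0)))"
    for Y :: "'a set \<times> ('a, 'b, 'c) fm" and F :: "('a, 'b, 'c) sequent"
  have hid: "derivable (\<Delta> + F)" if "Rel Y F" "Rs \<noteq> []" "\<forall>i<length Rs. \<forall>j<length Rs. i \<noteq> j \<longrightarrow> Rs ! i \<inter> Rs ! j = {}"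
    "\<Union> (set Rs) = UNIV" "\<Gamma>' + mset (map (\<lambda>R. (R, Atom p' ts')) Rs) = \<Delta> + replicate_mset m Y"
    for Y F Rs \<Delta> \<Gamma>' p' ts' m
  proof -
    from that(1) obtain T p ts Ss where Y: "Y = (T, Atom p ts)" and F: "F = mset (map (\<lambda>S. (S, Atom p ts)) Ss)"
      and cv: "\<forall>x. rcnt Ss x = (if x \<in> T then 1 else 0)" unfolding Rel_def by blast
    have idc: "\<forall>x. rcnt Rs x = 1" using that(2-4) by (subst idc_iff[symmetric]) simp
    show ?thesis unfolding F by (rule split_id[OF that(5)[unfolded Y] idc cv])
  qed
  show ?thesis
    apply (rule replace[OF assms(1), where Rel=Rel and \<Delta>=\<Gamma> and m=1 and Y="(T, Atom p ts)" and F="mset (map (\<lambda>S. (S, Atom p ts)) Ss)"])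
    subgoal premises pr for Y F
    proof -
      from pr obtain T p ts Ss where Y: "Y = (T, Atom p ts)" and F: "F = mset (map (\<lambda>S. (S, Atom p ts)) Ss)"
        and cv: "\<forall>x. rcnt Ss x = (if x \<in> T then 1 else 0)" unfolding Rel_def by blast
      show ?thesis unfolding Rel_def
        by (rule exI[of _ T], rule exI[of _ p], rule exI[of _ "map (lift_trm 0) ts"], rule exI[of _ Ss])
          (simp add: Y F cv liftI_def lift_seq_fam)
    qed
    subgoal by (rule hid)
    subgoal by (auto simp: Rel_def)
    subgoal by (auto simp: Rel_def)
    subgoal by (auto simp: Rel_def)
    subgoal by (auto simp: Rel_def)
    subgoal by (auto simp: Rel_def)
    subgoal by (auto simp: Rel_def)
    subgoal by (auto simp: Rel_def)
    subgoal by (auto simp: Rel_def)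
    using assms(2) by (auto simp: Rel_def)
qed


definition partsR :: "'r set multiset \<Rightarrow> bool" where
  "partsR M \<longleftrightarrow> (\<forall>x. size (filter_mset (\<lambda>R. x \<notin> R) M) = 1)"

definition ctx :: "('r set \<times> ('r, 'f, 'p) sequent) multiset \<Rightarrow> ('r, 'f, 'p) sequent" where
  "ctx P = sum_mset (image_mset snd P)"

lemma ctx_simps[simp]: "ctx {#} = {#}" "ctx (add_mset q P) = snd q + ctx P"
  by (auto simp: ctx_def)

lemma ctx_lift: "ctx (image_mset (\<lambda>q. (fst q, lift_seq (snd q))) P) = lift_seq (ctx P)"
  by (induction P) auto

lemma partsR_at: "partsR M \<Longrightarrow> size (filter_mset (\<lambda>R. x \<notin> R) M) = 1"
  unfolding partsR_def by blast

lemma partsR_nonempty: "partsR M \<Longrightarrow> M \<noteq> {#}"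
proof
  assume "partsR M" "M = {#}"
  then show False using partsR_at[of M undefined] by simp
qed

lemma partsR_disj: "partsR (add_mset R (add_mset R1 M)) \<Longrightarrow> x \<notin> R \<Longrightarrow> x \<in> R1"
proof (rule ccontr)
  assume "partsR (add_mset R (add_mset R1 M))" "x \<notin> R" "x \<notin> R1"
  then show False using partsR_at[of "add_mset R (add_mset R1 M)" x] by simp
qed

lemma partsR_merge:
  assumes "partsR (add_mset R (add_mset R1 M))"
  shows "partsR (add_mset (R1 \<inter> R) M)"
  unfolding partsR_def
proof
  fix x
  have h: "size (filter_mset (\<lambda>R. x \<notin> R) (add_mset R (add_mset R1 M))) = 1"
    by (rule partsR_at[OF assms])
  show "size (filter_mset (\<lambda>R. x \<notin> R) (add_mset (R1 \<inter> R) M)) = 1"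
    using h by (cases "x \<in> R"; cases "x \<in> R1") auto
qed

lemma partsR_single: "partsR {#R#} \<Longrightarrow> R = {}"
proof -
  assume p: "partsR {#R#}"
  have "x \<notin> R" for x using partsR_at[OF p, of x] by (simp split: if_splits)
  then show ?thesis by blast
qed

lemma atom_cut:
  assumes "partsR (image_mset fst P)" "\<forall>q\<in>#P. derivable (snd q + {#(fst q, Atom p ts)#})"
  shows "derivable (ctx P)"
  using assms
proof (induction "size P" arbitrary: P p ts rule: less_induct)
  case less
  have "P \<noteq> {#}" using partsR_nonempty[OF less.prems(1)] by auto
  then obtain R0 \<Gamma>0 P' where P: "P = add_mset (R0, \<Gamma>0) P'" by (metis multiset_cases surj_pair)
  define Rel where "Rel Y F \<longleftrightarrow> (\<exists>R p ts Q. Y = (R, Atom p ts) \<and> F = ctx Q \<and> partsR (add_mset R (image_mset fst Q))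
      \<and> size Q < size P \<and> (\<forall>q\<in>#Q. derivable (snd q + {#(fst q, Atom p ts)#})))"
    for Y :: "'a set \<times> ('a, 'b, 'c) fm" and F :: "('a, 'b, 'c) sequent"
  have hid: "derivable (\<Delta> + F)" if "Rel Y F" "Rs \<noteq> []" "\<forall>i<length Rs. \<forall>j<length Rs. i \<noteq> j \<longrightarrow> Rs ! i \<inter> Rs ! j = {}"
    "\<Union> (set Rs) = UNIV" "\<Gamma>' + mset (map (\<lambda>R. (R, Atom p' ts')) Rs) = \<Delta> + replicate_mset m Y"
    for Y F Rs \<Delta> \<Gamma>' p' ts' m
  proof -
    from that(1) obtain R pa tsa Q where Y: "Y = (R, Atom pa tsa)" and F: "F = ctx Q"
      and pt: "partsR (add_mset R (image_mset fst Q))" and sz: "size Q < size P"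
      and dq: "\<forall>q\<in>#Q. derivable (snd q + {#(fst q, Atom pa tsa)#})" unfolding Rel_def by blast
    have idc: "\<forall>x. rcnt Rs x = 1" using that(2-4) by (subst idc_iff[symmetric]) simp
    define Ts where "Ts = filter (\<lambda>S. (S, Atom p' ts') \<noteq> Y) Rs"
    have sub: "mset (map (\<lambda>S. (S, Atom p' ts')) Ts) \<subseteq># \<Delta>" using fam_filter_sub[OF that(5)] by (simp add: Ts_def)
    show ?thesis
    proof (cases "\<forall>x. rcnt Ts x = 1")
      case True
      then have "derivable \<Delta>" by (rule derivable_Id_cnt[OF _ sub])
      then show ?thesis by (rule weaken)
    next
      case False
      have c: "p' = pa \<and> ts' = tsa \<and> R \<in> set Rs"
      proof (rule ccontr)
        assume "\<not> (p' = pa \<and> ts' = tsa \<and> R \<in> set Rs)"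
        then have "Ts = Rs" by (auto simp: Ts_def Y intro: filter_True)
        then show False using False idc by simp
      qed
      then have Ts': "Ts = filter (\<lambda>S. S \<noteq> R) Rs" by (simp add: Ts_def Y)
      have cT: "rcnt Ts x = (if x \<in> R then 0 else 1)" for x using cnt_remove[OF idc, of R x] c Ts' by simp
      have "Q \<noteq> {#}"
      proof
        assume "Q = {#}"
        then have "R = {}" using pt partsR_single by simp
        then show False using False cT by simp
      qed
      then obtain R1 \<Gamma>1 Q' where Q: "Q = add_mset (R1, \<Gamma>1) Q'" by (metis multiset_cases surj_pair)
      have pt2: "partsR (add_mset R (add_mset R1 (image_mset fst Q')))" using pt Q by simp
      have sub1: "x \<notin> R \<Longrightarrow> x \<in> R1" for x using partsR_disj[OF pt2] by blast
      have cv: "\<forall>x. rcnt (Ts @ [R1 \<inter> R]) x = (if x \<in> R1 then 1 else 0)"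
      proof
        fix x show "rcnt (Ts @ [R1 \<inter> R]) x = (if x \<in> R1 then 1 else 0)"
          using cT[of x] sub1[of x] by auto
      qed
      have d1: "derivable (\<Gamma>1 + {#(R1, Atom pa tsa)#})" using dq Q by simp
      have "derivable (\<Gamma>1 + mset (map (\<lambda>S. (S, Atom pa tsa)) (Ts @ [R1 \<inter> R])))" by (rule split_atom[OF d1 cv])
      then have d2: "derivable ((\<Gamma>1 + mset (map (\<lambda>S. (S, Atom pa tsa)) Ts)) + {#(R1 \<inter> R, Atom pa tsa)#})"
        by (simp add: ac_simps)
      define Qn where "Qn = add_mset (R1 \<inter> R, \<Gamma>1 + mset (map (\<lambda>S. (S, Atom pa tsa)) Ts)) Q'"
      have "derivable (ctx Qn)"
      proof (rule less.hyps)
        show "size Qn < size P" using sz Q by (simp add: Qn_def)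
        show "partsR (image_mset fst Qn)" using partsR_merge[OF pt2] by (simp add: Qn_def)
        show "\<forall>q\<in>#Qn. derivable (snd q + {#(fst q, Atom pa tsa)#})" using d2 dq Q by (auto simp: Qn_def)
      qed
      then have d3: "derivable (mset (map (\<lambda>S. (S, Atom pa tsa)) Ts) + (\<Gamma>1 + ctx Q'))" by (simp add: Qn_def ac_simps)
      have "mset (map (\<lambda>S. (S, Atom pa tsa)) Ts) + (\<Gamma>1 + ctx Q') \<subseteq># \<Delta> + (\<Gamma>1 + ctx Q')"
        using sub c by (simp add: subset_mset.add_right_mono)
      then have "mset (map (\<lambda>S. (S, Atom pa tsa)) Ts) + (\<Gamma>1 + ctx Q') \<subseteq># \<Delta> + F" by (simp add: F Q)
      then show ?thesis by (rule weaken_sub[OF d3])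
    qed
  qed
  have lf: "Rel (liftI Y) (lift_seq F)" if "Rel Y F" for Y F
  proof -
    from that obtain R pa tsa Q where Y: "Y = (R, Atom pa tsa)" and F: "F = ctx Q"
      and pt: "partsR (add_mset R (image_mset fst Q))" and sz: "size Q < size P"
      and dq: "\<forall>q\<in>#Q. derivable (snd q + {#(fst q, Atom pa tsa)#})" unfolding Rel_def by blast
    define Q2 where "Q2 = image_mset (\<lambda>q. (fst q, lift_seq (snd q))) Q"
    have "\<forall>q\<in>#Q2. derivable (snd q + {#(fst q, Atom pa (map (lift_trm 0) tsa))#})"
    proof
      fix q assume "q \<in># Q2"
      then obtain q0 where q0: "q0 \<in># Q" "q = (fst q0, lift_seq (snd q0))" by (auto simp: Q2_def)
      have "derivable (lift_seq (snd q0 + {#(fst q0, Atom pa tsa)#}))" using dq q0(1) derivable_lift by blast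
      then show "derivable (snd q + {#(fst q, Atom pa (map (lift_trm 0) tsa))#})" using q0(2) by simp
    qed
    moreover have "image_mset fst Q2 = image_mset fst Q" by (simp add: Q2_def multiset.map_comp comp_def)
    moreover have "size Q2 = size Q" by (simp add: Q2_def)
    ultimately show ?thesis unfolding Rel_def
      by (intro exI[of _ R] exI[of _ pa] exI[of _ "map (lift_trm 0) tsa"] exI[of _ Q2])
        (simp add: Y F liftI_def Q2_def ctx_lift pt sz)
  qed
  have d0: "derivable (\<Gamma>0 + {#(R0, Atom p ts)#})" using less.prems(2) P by simp
  have "derivable (\<Gamma>0 + ctx P')"
    apply (rule replace[OF d0, where Rel=Rel and \<Delta>=\<Gamma>0 and m=1 and Y="(R0, Atom p ts)" and F="ctx P'"])
    subgoal by (rule lf)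
    subgoal by (rule hid)
    subgoal by (auto simp: Rel_def)
    subgoal by (auto simp: Rel_def)
    subgoal by (auto simp: Rel_def)
    subgoal by (auto simp: Rel_def)
    subgoal by (auto simp: Rel_def)
    subgoal by (auto simp: Rel_def)
    subgoal by (auto simp: Rel_def)
    subgoal by (auto simp: Rel_def)
    subgoal by simp
    unfolding Rel_def
    apply (rule exI[of _ R0], rule exI[of _ p], rule exI[of _ ts], rule exI[of _ P'])
    using less.prems P by auto
  then show ?case using P by simp
qed


lemma inv_conj_pos_r:
  assumes "derivable (\<Gamma> + {#(R, Conj U A B)#})" "R \<in> U"
  shows "derivable (\<Gamma> + {#(R, B)#})"
proof -
  define Rel where "Rel Y F \<longleftrightarrow> (\<exists>R U A B. R \<in> U \<and> Y = (R, Conj U A B) \<and> F = {#(R, B)#})"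
    for Y :: "'a set \<times> ('a, 'b, 'c) fm" and F :: "('a, 'b, 'c) sequent"
  show ?thesis
    apply (rule replace[OF assms(1), where Rel=Rel and \<Delta>=\<Gamma> and m=1 and Y="(R, Conj U A B)" and F="{#(R, B)#}"])
    subgoal by (auto simp: Rel_def liftI_def)
    subgoal by (erule id_nonatom) (auto simp: Rel_def)
    subgoal by (auto simp: Rel_def)
    subgoal by (auto simp: Rel_def)
    subgoal by (auto simp: Rel_def)
    subgoal premises pr for Y F \<Delta> R' U' A' B'
    proof -
      from pr(1,2) have F: "F = {#(R', B')#}" unfolding Rel_def by auto
      show ?thesis by (rule struct[OF pr(5)]) (auto simp: F)
    qed
    using assms(2) by (auto simp: Rel_def)
qed

lemma inv_imp_pos_r:
  assumes "derivable (\<Gamma> + {#(R, Imp f U A B)#})" "R \<in> U"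
  shows "derivable (\<Gamma> + {#(R, B)#})"
proof -
  define Rel where "Rel Y F \<longleftrightarrow> (\<exists>R U f A B. R \<in> U \<and> Y = (R, Imp f U A B) \<and> F = {#(R, B)#})"
    for Y :: "'a set \<times> ('a, 'b, 'c) fm" and F :: "('a, 'b, 'c) sequent"
  show ?thesis
    apply (rule replace[OF assms(1), where Rel=Rel and \<Delta>=\<Gamma> and m=1 and Y="(R, Imp f U A B)" and F="{#(R, B)#}"])
    subgoal by (auto simp: Rel_def liftI_def)
    subgoal by (erule id_nonatom) (auto simp: Rel_def)
    subgoal by (auto simp: Rel_def)
    subgoal by (auto simp: Rel_def)
    subgoal by (auto simp: Rel_def)
    subgoal by (auto simp: Rel_def)
    subgoal by (auto simp: Rel_def)
    subgoal premises pr for Y F \<Delta>1 \<Delta>2 R' U' f' A' B'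
    proof -
      from pr(1,2) have F: "F = {#(R', B')#}" unfolding Rel_def by auto
      show ?thesis by (rule struct[OF pr(5)]) (auto simp: F)
    qed
    using assms(2) by (auto simp: Rel_def)
qed

definition cutprop :: "('r, 'f, 'p) fm \<Rightarrow> bool" where
  "cutprop A \<longleftrightarrow> (\<forall>P. partsR (image_mset fst P) \<longrightarrow> (\<forall>q\<in>#P. derivable (snd q + {#(fst q, A)#})) \<longrightarrow> derivable (ctx P))"

lemma cutpropD: "cutprop A \<Longrightarrow> partsR (image_mset fst P) \<Longrightarrow> (\<forall>q\<in>#P. derivable (snd q + {#(fst q, A)#})) \<Longrightarrow> derivable (ctx P)"
  unfolding cutprop_def by blast

lemma two_neg:
  assumes u: "ultrafilter U" and p: "partsR (add_mset R1 (add_mset R2 M))"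
  shows "R1 \<in> U \<or> R2 \<in> U"
proof (rule ccontr)
  assume n: "\<not> (R1 \<in> U \<or> R2 \<in> U)"
  then have "- R1 \<in> U" "- R2 \<in> U" using u unfolding ultrafilter_def by blast+
  then have "- R1 \<inter> - R2 \<in> U" using u unfolding ultrafilter_def by blast
  moreover have "- R1 \<inter> - R2 = {}" using partsR_disj[OF p] by auto
  ultimately have "{} \<in> U" by simp
  then have "R1 \<in> U" using u unfolding ultrafilter_def by blast
  then show False using n by blast
qed

lemma neg_split:
  assumes u: "ultrafilter U" and p: "partsR (image_mset fst P)"
  shows "(\<forall>q\<in>#P. fst q \<in> U) \<or> (\<exists>R \<Gamma> P'. P = add_mset (R, \<Gamma>) P' \<and> R \<notin> U \<and> (\<forall>q\<in>#P'. fst q \<in> U))"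
proof (cases "\<forall>q\<in>#P. fst q \<in> U")
  case True
  then show ?thesis by blast
next
  case False
  then obtain q where q: "q \<in># P" "fst q \<notin> U" by blast
  define P' where "P' = P - {#q#}"
  have P: "P = add_mset q P'" using q(1) by (simp add: P'_def)
  have "\<forall>q'\<in>#P'. fst q' \<in> U"
  proof
    fix q' assume "q' \<in># P'"
    then obtain P'' where "P' = add_mset q' P''" by (metis multi_member_split)
    then have "partsR (add_mset (fst q) (add_mset (fst q') (image_mset fst P'')))" using p P by simp
    then show "fst q' \<in> U" using two_neg[OF u] q(2) by blast
  qed
  then show ?thesis using P q(2) by (metis prod.collapse)
qed

lemma partsR_vimage: "partsR M \<Longrightarrow> partsR (image_mset (vimage f) M)"
  unfolding partsR_def
proof
  fix x assume "\<forall>x. size (filter_mset (\<lambda>R. x \<notin> R) M) = 1"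
  then have "size (filter_mset (\<lambda>R. f x \<notin> R) M) = 1" by blast
  then show "size (filter_mset (\<lambda>R. x \<notin> R) (image_mset (vimage f) M)) = 1"
    by (simp add: filter_mset_image_mset)
qed

lemma ctx_image: "ctx (image_mset (\<lambda>q. (g q, snd q)) P) = ctx P"
  by (induction P) auto

lemma fn_cut:
  fixes B :: "('r, 'f, 'p) fm"
  assumes IH: "\<And>B'. fsize B' < n \<Longrightarrow> wf_fm B' \<Longrightarrow> cutprop (B' :: ('r, 'f, 'p) fm)"
    and d: "derivable (\<Gamma>0 + {#(R0, Forall U B)#})" and R0: "R0 \<notin> U" and sz: "fsize B < n"
    and wf: "wf_fm (Forall U B)"
    and pt: "partsR (add_mset R0 (image_mset fst P'))"
    and dP: "\<forall>q\<in>#P'. fst q \<in> U \<and> derivable (snd q + {#(fst q, Forall U B)#})"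
  shows "derivable (\<Gamma>0 + ctx P')"
proof -
  define Rel where "Rel Y F \<longleftrightarrow> (\<exists>R B Q. Y = (R, Forall U B) \<and> R \<notin> U \<and> fsize B < n \<and> wf_fm (Forall U B)
     \<and> F = ctx Q \<and> partsR (add_mset R (image_mset fst Q)) \<and> (\<forall>q\<in>#Q. fst q \<in> U \<and> derivable (snd q + {#(fst q, Forall U B)#})))"
    for Y :: "'r set \<times> ('r, 'f, 'p) fm" and F :: "('r, 'f, 'p) sequent"
  have lf: "Rel (liftI Y) (lift_seq F)" if "Rel Y F" for Y F
  proof -
    from that obtain R B Q where Y: "Y = (R, Forall U B)" and R: "R \<notin> U" and s: "fsize B < n" and w: "wf_fm (Forall U B)"
      and F: "F = ctx Q" and pt: "partsR (add_mset R (image_mset fst Q))"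
      and dq: "\<forall>q\<in>#Q. fst q \<in> U \<and> derivable (snd q + {#(fst q, Forall U B)#})" unfolding Rel_def by blast
    define Q2 where "Q2 = image_mset (\<lambda>q. (fst q, lift_seq (snd q))) Q"
    have "\<forall>q\<in>#Q2. fst q \<in> U \<and> derivable (snd q + {#(fst q, Forall U (lift_fm 1 B))#})"
    proof
      fix q assume "q \<in># Q2"
      then obtain q0 where q0: "q0 \<in># Q" "q = (fst q0, lift_seq (snd q0))" by (auto simp: Q2_def)
      have "derivable (lift_seq (snd q0 + {#(fst q0, Forall U B)#}))" using dq q0(1) derivable_lift by blast
      then show "fst q \<in> U \<and> derivable (snd q + {#(fst q, Forall U (lift_fm 1 B))#})" using q0 dq by simp
    qed
    moreover have "image_mset fst Q2 = image_mset fst Q" by (simp add: Q2_def multiset.map_comp comp_def)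
    moreover have w2: "ultrafilter U" "wf_fm B" using w by simp_all
    ultimately show ?thesis unfolding Rel_def
      by (intro exI[of _ R] exI[of _ "lift_fm 1 B"] exI[of _ Q2])
        (simp add: Y F liftI_def Q2_def ctx_lift pt s w2 R)
  qed
  have fnh: "derivable (\<Delta> + F)" if "Rel Y F" "Y = (R', Forall U' A')" "R' \<notin> U'"
     "derivable (add_mset (R', subst_fm 0 t A') (\<Delta> + F))" for Y F \<Delta> R' U' A' t
  proof -
    from that(1) obtain R B Q where Y: "Y = (R, Forall U B)" and s: "fsize B < n" and w: "wf_fm (Forall U B)"
      and F: "F = ctx Q" and pt: "partsR (add_mset R (image_mset fst Q))"
      and dq: "\<forall>q\<in>#Q. fst q \<in> U \<and> derivable (snd q + {#(fst q, Forall U B)#})" unfolding Rel_def by blast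
    have e: "R' = R" "U' = U" "A' = B" using that(2) Y by auto
    define Qn where "Qn = add_mset (R, \<Delta> + F) Q"
    have cp: "cutprop (subst_fm 0 t B)" using IH[of "subst_fm 0 t B"] s w by simp
    have "derivable (ctx Qn)"
    proof (rule cutpropD[OF cp])
      show "partsR (image_mset fst Qn)" using pt by (simp add: Qn_def)
      show "\<forall>q\<in>#Qn. derivable (snd q + {#(fst q, subst_fm 0 t B)#})"
      proof
        fix q assume "q \<in># Qn"
        then consider "q = (R, \<Delta> + F)" | "q \<in># Q" by (auto simp: Qn_def)
        then show "derivable (snd q + {#(fst q, subst_fm 0 t B)#})"
        proof cases
          case 1
          then show ?thesis using that(4) e by simp
        next
          case 2
          then show ?thesis using dq inv_forall_pos by blast
        qed
      qed
    qed
    then have "derivable (\<Delta> + F + F)" by (simp add: Qn_def F)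
    then show ?thesis by (rule contract)
  qed
  show ?thesis
    apply (rule replace[OF d, where Rel=Rel and \<Delta>=\<Gamma>0 and m=1 and Y="(R0, Forall U B)" and F="ctx P'"])
    subgoal by (rule lf)
    subgoal by (erule id_nonatom) (auto simp: Rel_def)
    subgoal by (auto simp: Rel_def)
    subgoal by (auto simp: Rel_def)
    subgoal by (auto simp: Rel_def)
    subgoal by (auto simp: Rel_def)
    subgoal by (auto simp: Rel_def)
    subgoal by (auto simp: Rel_def)
    subgoal by (rule fnh)
    subgoal by (auto simp: Rel_def)
    subgoal by simp
    unfolding Rel_def
    apply (rule exI[of _ R0], rule exI[of _ B], rule exI[of _ P'])
    using R0 sz wf pt dP by simp
qed


theorem all_cut:
  fixes A :: "('r, 'f, 'p) fm"
  shows "wf_fm A \<Longrightarrow> cutprop A"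
proof (induction "fsize A" arbitrary: A rule: less_induct)
  case less
  have IH: "\<And>B. fsize B < fsize A \<Longrightarrow> wf_fm B \<Longrightarrow> cutprop (B :: ('r, 'f, 'p) fm)" using less.hyps by blast
  show ?case unfolding cutprop_def
  proof (intro allI impI)
    fix P :: "('r set \<times> ('r, 'f, 'p) sequent) multiset"
    assume pt: "partsR (image_mset fst P)" and dP: "\<forall>q\<in>#P. derivable (snd q + {#(fst q, A)#})"
    show "derivable (ctx P)"
    proof (cases A)
      case (Atom p ts)
      then show ?thesis using atom_cut[OF pt] dP by simp
    next
      case (Neg f B)
      have cB: "cutprop B" using IH[of B] Neg less.prems by simp
      define Q where "Q = image_mset (\<lambda>q. (f -` fst q, snd q)) P"
      have "derivable (ctx Q)"
      proof (rule cutpropD[OF cB])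
        show "partsR (image_mset fst Q)" using partsR_vimage[OF pt, of f] by (simp add: Q_def multiset.map_comp comp_def)
        show "\<forall>q\<in>#Q. derivable (snd q + {#(fst q, B)#})"
        proof
          fix q assume "q \<in># Q"
          then obtain q0 where q0: "q0 \<in># P" "q = (f -` fst q0, snd q0)" by (auto simp: Q_def)
          have "derivable (snd q0 + {#(fst q0, Neg f B)#})" using dP q0(1) Neg by simp
          then show "derivable (snd q + {#(fst q, B)#})" using q0(2) inv_neg by simp
        qed
      qed
      then show ?thesis by (simp add: Q_def ctx_image)
    next
      case (Conj U B C)
      have u: "ultrafilter U" "wf_fm B" "wf_fm C" using less.prems Conj by auto
      have cB: "cutprop B" using IH[of B] Conj u by simp
      have cC: "cutprop C" using IH[of C] Conj u by simp
      from neg_split[OF u(1) pt] show ?thesis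
      proof (elim disjE exE conjE)
        assume pos: "\<forall>q\<in>#P. fst q \<in> U"
        show ?thesis
        proof (rule cutpropD[OF cB pt])
          show "\<forall>q\<in>#P. derivable (snd q + {#(fst q, B)#})"
          proof
            fix q assume q: "q \<in># P"
            have "derivable (snd q + {#(fst q, Conj U B C)#})" using dP q Conj by simp
            then show "derivable (snd q + {#(fst q, B)#})" using inv_conj_pos pos q by blast
          qed
        qed
      next
        fix Rj \<Gamma>j P' assume P: "P = add_mset (Rj, \<Gamma>j) P'" and Rj: "Rj \<notin> U" and pos: "\<forall>q\<in>#P'. fst q \<in> U"
        have dj: "derivable (\<Gamma>j + {#(Rj, Conj U B C)#})" using dP P Conj by simp
        have dj2: "derivable (\<Gamma>j + {#(Rj, B), (Rj, C)#})" using inv_conj_neg[OF dj Rj] .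
        have dPC: "\<forall>q\<in>#P'. derivable (snd q + {#(fst q, Conj U B C)#})" using dP P Conj by simp
        have dB: "\<forall>q\<in>#P'. derivable (snd q + {#(fst q, B)#})" using dPC pos inv_conj_pos by blast
        have dC: "\<forall>q\<in>#P'. derivable (snd q + {#(fst q, C)#})" using dPC pos inv_conj_pos_r by blast
        have ptP: "partsR (add_mset Rj (image_mset fst P'))" using pt P by simp
        define Q1 where "Q1 = add_mset (Rj, \<Gamma>j + {#(Rj, B)#}) P'"
        have j1: "derivable (\<Gamma>j + {#(Rj, B)#} + {#(Rj, C)#})" by (rule struct[OF dj2]) auto
        have "derivable (ctx Q1)"
        proof (rule cutpropD[OF cC])
          show "partsR (image_mset fst Q1)" using ptP by (simp add: Q1_def)
          show "\<forall>q\<in>#Q1. derivable (snd q + {#(fst q, C)#})" using j1 dC by (simp add: Q1_def)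
        qed
        then have d1: "derivable (\<Gamma>j + ctx P' + {#(Rj, B)#})" by (simp add: Q1_def ac_simps)
        define Q2 where "Q2 = add_mset (Rj, \<Gamma>j + ctx P') P'"
        have "derivable (ctx Q2)"
        proof (rule cutpropD[OF cB])
          show "partsR (image_mset fst Q2)" using ptP by (simp add: Q2_def)
          show "\<forall>q\<in>#Q2. derivable (snd q + {#(fst q, B)#})" using d1 dB by (simp add: Q2_def)
        qed
        then have "derivable (\<Gamma>j + ctx P' + ctx P')" by (simp add: Q2_def)
        then have "derivable (\<Gamma>j + ctx P')" by (rule contract)
        then show ?thesis by (simp add: P)
      qed
    next
      case (Imp f U B C)
      have u: "ultrafilter U" "wf_fm B" "wf_fm C" using less.prems Imp by auto
      have cB: "cutprop B" using IH[of B] Imp u by simp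
      have cC: "cutprop C" using IH[of C] Imp u by simp
      from neg_split[OF u(1) pt] show ?thesis
      proof (elim disjE exE conjE)
        assume pos: "\<forall>q\<in>#P. fst q \<in> U"
        define Q where "Q = image_mset (\<lambda>q. (f -` fst q, snd q)) P"
        have "derivable (ctx Q)"
        proof (rule cutpropD[OF cB])
          show "partsR (image_mset fst Q)" using partsR_vimage[OF pt, of f] by (simp add: Q_def multiset.map_comp comp_def)
          show "\<forall>q\<in>#Q. derivable (snd q + {#(fst q, B)#})"
          proof
            fix q assume "q \<in># Q"
            then obtain q0 where q0: "q0 \<in># P" "q = (f -` fst q0, snd q0)" by (auto simp: Q_def)
            have "derivable (snd q0 + {#(fst q0, Imp f U B C)#})" using dP q0(1) Imp by simp
            then show "derivable (snd q + {#(fst q, B)#})" using inv_imp_pos[of "snd q0" "fst q0" f U B C] q0 pos by simp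
          qed
        qed
        then show ?thesis by (simp add: Q_def ctx_image)
      next
        fix Rj \<Gamma>j P' assume P: "P = add_mset (Rj, \<Gamma>j) P'" and Rj: "Rj \<notin> U" and pos: "\<forall>q\<in>#P'. fst q \<in> U"
        have dj: "derivable (\<Gamma>j + {#(Rj, Imp f U B C)#})" using dP P Imp by simp
        have dj2: "derivable (\<Gamma>j + {#(f -` Rj, B), (Rj, C)#})" using inv_imp_neg[OF dj Rj] .
        have dPC: "\<forall>q\<in>#P'. derivable (snd q + {#(fst q, Imp f U B C)#})" using dP P Imp by simp
        have dB: "\<forall>q\<in>#P'. derivable (snd q + {#(f -` fst q, B)#})" using dPC pos inv_imp_pos by blast
        have dC: "\<forall>q\<in>#P'. derivable (snd q + {#(fst q, C)#})" using dPC pos inv_imp_pos_r by blast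
        have ptP: "partsR (add_mset Rj (image_mset fst P'))" using pt P by simp
        define Q1 where "Q1 = add_mset (Rj, \<Gamma>j + {#(f -` Rj, B)#}) P'"
        have j1: "derivable (\<Gamma>j + {#(f -` Rj, B)#} + {#(Rj, C)#})" by (rule struct[OF dj2]) auto
        have "derivable (ctx Q1)"
        proof (rule cutpropD[OF cC])
          show "partsR (image_mset fst Q1)" using ptP by (simp add: Q1_def)
          show "\<forall>q\<in>#Q1. derivable (snd q + {#(fst q, C)#})" using j1 dC by (simp add: Q1_def)
        qed
        then have d1: "derivable (\<Gamma>j + ctx P' + {#(f -` Rj, B)#})" by (simp add: Q1_def ac_simps)
        define Q2 where "Q2 = add_mset (f -` Rj, \<Gamma>j + ctx P') (image_mset (\<lambda>q. (f -` fst q, snd q)) P')"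
        have "derivable (ctx Q2)"
        proof (rule cutpropD[OF cB])
          have "image_mset fst Q2 = image_mset (vimage f) (add_mset Rj (image_mset fst P'))"
            by (simp add: Q2_def multiset.map_comp comp_def)
          then show "partsR (image_mset fst Q2)" using partsR_vimage[OF ptP, of f] by simp
          show "\<forall>q\<in>#Q2. derivable (snd q + {#(fst q, B)#})" using d1 dB by (auto simp: Q2_def)
        qed
        then have "derivable (\<Gamma>j + ctx P' + ctx P')" by (simp add: Q2_def ctx_image)
        then have "derivable (\<Gamma>j + ctx P')" by (rule contract)
        then show ?thesis by (simp add: P)
      qed
    next
      case (Forall U B)
      have u: "ultrafilter U" "wf_fm B" using less.prems Forall by auto
      from neg_split[OF u(1) pt] show ?thesis
      proof (elim disjE exE conjE)
        assume pos: "\<forall>q\<in>#P. fst q \<in> U"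
        have cB: "cutprop (subst_fm 0 (Var 0) B)" using IH[of "subst_fm 0 (Var 0) B"] Forall u by simp
        show ?thesis
        proof (rule cutpropD[OF cB pt])
          show "\<forall>q\<in>#P. derivable (snd q + {#(fst q, subst_fm 0 (Var 0) B)#})"
          proof
            fix q assume q: "q \<in># P"
            have "derivable (snd q + {#(fst q, Forall U B)#})" using dP q Forall by simp
            then show "derivable (snd q + {#(fst q, subst_fm 0 (Var 0) B)#})" using inv_forall_pos pos q by blast
          qed
        qed
      next
        fix Rj \<Gamma>j P' assume P: "P = add_mset (Rj, \<Gamma>j) P'" and Rj: "Rj \<notin> U" and pos: "\<forall>q\<in>#P'. fst q \<in> U"
        have dj: "derivable (\<Gamma>j + {#(Rj, Forall U B)#})" using dP P Forall by simp
        have ptP: "partsR (add_mset Rj (image_mset fst P'))" using pt P by simp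
        have dP': "\<forall>q\<in>#P'. fst q \<in> U \<and> derivable (snd q + {#(fst q, Forall U B)#})" using dP P Forall pos by simp
        have s1: "fsize B < fsize A" using Forall by simp
        have s2: "wf_fm (Forall U B)" using less.prems Forall by simp
        have "derivable (\<Gamma>j + ctx P')"
          using fn_cut[where n="fsize A", OF IH dj Rj s1 s2 ptP dP'] by simp
        then show ?thesis by (simp add: P)
      qed
    qed
  qed
qed

theorem mainTheorem7:
  fixes Rs :: "'r set list"
    and \<Gamma>s :: "('r, 'f, 'p) sequent list"
    and A :: "('r, 'f, 'p) fm"
  assumes "length Rs \<ge> 1"
    and "length \<Gamma>s = length Rs"
    and "\<forall>i < length Rs. \<forall>j < length Rs. i \<noteq> j \<longrightarrow> (- (Rs ! i)) \<inter> (- (Rs ! j)) = {}"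
    and "(\<Union>i < length Rs. - (Rs ! i)) = UNIV"
    and "wf_fm A"
    and "\<forall>i < length \<Gamma>s. wf_seq (\<Gamma>s ! i)"
    and "\<forall>i < length Rs. derivable (\<Gamma>s ! i + {#(Rs ! i, A)#})"
  shows "derivable (sum_list \<Gamma>s)"
proof -
  define P where "P = mset (zip Rs \<Gamma>s)"
  have fstP: "image_mset fst P = mset Rs"
    by (metis P_def mset_map map_fst_zip assms(2))
  have sndP: "image_mset snd P = mset \<Gamma>s"
    by (metis P_def mset_map map_snd_zip assms(2))
  define L where "L = map uminus Rs"
  have c1: "L \<noteq> []" using assms(1) by (auto simp: L_def)
  have c2: "\<forall>i<length L. \<forall>j<length L. i \<noteq> j \<longrightarrow> L ! i \<inter> L ! j = {}" using assms(3) by (simp add: L_def)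
  have c3: "\<Union> (set L) = UNIV"
  proof -
    have "x \<in> \<Union> (set L)" for x
    proof -
      have "x \<in> (\<Union>i < length Rs. - (Rs ! i))" using assms(4) by simp
      then obtain i where i: "i < length Rs" "x \<notin> Rs ! i" by auto
      then have "- (Rs ! i) \<in> set L" unfolding L_def using nth_mem by fastforce
      then show ?thesis using i by blast
    qed
    then show ?thesis by blast
  qed
  have idc: "\<forall>x. rcnt L x = 1" using idc_iff[of L] c1 c2 c3 by blast
  have pt: "partsR (image_mset fst P)" unfolding fstP partsR_def
  proof
    fix x
    have "rcnt L x = length (filter (\<lambda>R. x \<notin> R) Rs)" by (simp add: rcnt_def L_def filter_map comp_def)
    also have "\<dots> = size (filter_mset (\<lambda>R. x \<notin> R) (mset Rs))" by (metis mset_filter size_mset)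
    finally show "size (filter_mset (\<lambda>R. x \<notin> R) (mset Rs)) = 1" using idc by simp
  qed
  have dP: "\<forall>q\<in>#P. derivable (snd q + {#(fst q, A)#})"
  proof
    fix q assume "q \<in># P"
    then have "q \<in> set (zip Rs \<Gamma>s)" by (simp add: P_def)
    then obtain i where i: "i < length Rs" "q = (Rs ! i, \<Gamma>s ! i)" using assms(2) by (auto simp: set_zip)
    then show "derivable (snd q + {#(fst q, A)#})" using assms(7) by simp
  qed
  have "derivable (ctx P)" by (rule cutpropD[OF all_cut[OF assms(5)] pt dP])
  moreover have "ctx P = sum_list \<Gamma>s" unfolding ctx_def sndP by (simp add: sum_mset_sum_list)
  ultimately show ?thesis by simp
qed


end
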